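(* Assume the step size satisfies $$0<\alpha<\min\Big\{\frac{1+\lambda_{\min}(W)}{L_f},\ \frac{2}{L_f+m_f}\Big\}.$$ Consider the inexact DPGM: for a (possibly random) initial point $\mathbf{x}^0\in\mathbb{R}^N$ and $\ell=0,1,2,\dots$, $$\mathbf{y}^{\ell+1} = W\mathbf{x}^\ell - \alpha\nabla f(\mathbf{x}^\ell),\qquad \mathbf{x}^{\ell+1} = \operatorname{prox}_{\alpha g}(\mathbf{y}^{\ell+1}) + \mathbf{e}^\ell,$$ where each $\mathbf{e}^\ell$ is a random vector in $\mathbb{R}^N$ with $\mathbb{E}[\|\mathbf{e}^\ell\|]\le\eta<\infty$. Define $$d^\ell := \big[\|\bar{\mathbf{x}}^\ell - \mathbf{x}^*\|,\ \|\mathbf{x}^\ell-\bar{\mathbf{x}}^\ell\|,\ \|\mathbf{x}^\ell - \tilde{\mathbf{x}}\|\big]^\top,$$ $$A := \begin{bmatrix} c & \alpha L_f & 0\\ 0 & \rho(W) & \alpha L_f\\ 0&0&\zeta_\varphi\end{bmatrix},\qquad b := \begin{bmatrix} 2\alpha L_g\\ 2\alpha L_g + \|(I-W)\tilde{\mathbf{x}}\|\\ 0\end{bmatrix},$$ with $c := \sqrt{1-2\alpha m_f L_f/(m_f+L_f)}$ and $\zeta_\varphi := \max\{|1-L_\varphi|,|1-m_\varphi|\}$, $L_\varphi = 1-\lambda_{\min}(W)+\alpha L_f$, $m_\varphi=\alpha m_f$. Then $c,\rho(W),\zeta_\varphi\in(0,1)$ (so all eigenvalues of $A$ lie strictly inside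 the unit circle), and, whenever the expectations are finite, for all $\ell\ge0$, entrywise, $$\mathbb{E}[d^{\ell+1}] \le A\,\mathbb{E}[d^\ell] + b + \mathbf{1}_3\,\mathbb{E}[\|\mathbf{e}^\ell\|],\qquad \mathbb{E}[\|\mathbf{x}^{\ell+1}-\mathbf{x}^*\|]\le [1\ 1\ 0]\,\mathbb{E}[d^{\ell+1}].$$ In particular the mean error is upper-bounded by the output of an asymptotically stable linear system with bounded input, i.e. the iterates converge R-linearly (in mean) to a neighborhood of $\mathbf{x}^*$.
   Context: $N\ge2$ agents over an undirected connected graph $\mathcal{G}=(\mathcal{V},\mathcal{E})$. $W\in\mathbb{R}^{N\times N}$ is a symmetric doubly stochastic matrix (nonnegative entries, rows and columns summing to $1$) with $w_{ij}=0$ for $i\ne j$, $(i,j)\notin\mathcal{E}$, such that $\rho(W):=\|W-\tfrac1N\mathbf{1}\mathbf{1}^\top\|\in(0,1)$ (spectral norm); $\lambda_{\min}(W)$ is its smallest eigenvalue; $I$ is the identity; $\mathbf{1}_3$ the all-ones vector in $\mathbb{R}^3$. Each $f_i:\mathbb{R}\to\mathbb{R}$ is $L_{f_i}$-smooth and $m_{f_i}$-strongly convex; $f(\mathbf{x})=\sum_i f_i(x_i)$; $L_f=\max_i L_{f_i}$, $m_f=\min_i m_{f_i}$. Each $g_i:\mathbb{R}\to\mathbb{R}$ is closed, convex, proper and Lipschitz; $g(\mathbf{x})=\sum_i g_i(x_i)$; $L_g\ge0$ is a constant such that $g$ is $L_g$-Lipschitz on $\mathbb{R}^N$ (Euclidean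 norm). $x^*$ is the unique minimizer of $\sum_{i}(f_i+g_i)$ over $\mathbb{R}$ and $\mathbf{x}^*=x^*\mathbf{1}$. $\varphi_\alpha(\mathbf{x}) = \tfrac12\mathbf{x}^\top(I-W)\mathbf{x}+\alpha f(\mathbf{x})$ and $\tilde{\mathbf{x}} = \arg\min_{\mathbf{x}\in\mathbb{R}^N}\{\varphi_\alpha(\mathbf{x})+\alpha g(\mathbf{x})\}$. $\bar{\mathbf{x}}^\ell = \tfrac1N\mathbf{1}\mathbf{1}^\top\mathbf{x}^\ell$. $\operatorname{prox}_{\alpha h}(\mathbf{y}) = \arg\min_{\mathbf{x}}\{h(\mathbf{x})+\tfrac{1}{2\alpha}\|\mathbf{x}-\mathbf{y}\|^2\}$. Vector inequalities are entrywise. *)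

theory Defs
  imports "HOL-Analysis.Analysis" "HOL-Probability.Probability"
begin

definition lambda_min :: "real^'n^'n \<Rightarrow> real" where
  "lambda_min W = Min {l. \<exists>v::real^'n. v \<noteq> 0 \<and> W *v v = l *s v}"

definition avg :: "real^'n \<Rightarrow> real^'n" where
  "avg x = (\<chi> i. (\<Sum>j\<in>UNIV. x $ j) / real CARD('n))"

definition Jmat :: "real^'n^'n" where
  "Jmat = (\<chi> i j. 1 / real CARD('n))"

definition rho :: "real^'n^'n \<Rightarrow> real" where
  "rho W = onorm (\<lambda>x. (W - Jmat) *v x)"

definition sepsum :: "('n \<Rightarrow> real \<Rightarrow> real) \<Rightarrow> real^'n \<Rightarrow> real" where
  "sepsum h x = (\<Sum>i\<in>UNIV. h i (x $ i))"

definition grad :: "('n \<Rightarrow> real \<Rightarrow> real) \<Rightarrow> real^'n \<Rightarrow> real^'n" where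
  "grad f x = (\<chi> i. deriv (f i) (x $ i))"

definition prox :: "real \<Rightarrow> (real^'n \<Rightarrow> real) \<Rightarrow> real^'n \<Rightarrow> real^'n" where
  "prox a h y = (THE x. \<forall>z. h x + (norm (x - y))^2 / (2*a) \<le> h z + (norm (z - y))^2 / (2*a))"

definition smooth_fun :: "real \<Rightarrow> (real \<Rightarrow> real) \<Rightarrow> bool" where
  "smooth_fun L h \<longleftrightarrow> (\<forall>x. h differentiable (at x)) \<and>
     (\<forall>x y. \<bar>deriv h x - deriv h y\<bar> \<le> L * \<bar>x - y\<bar>)"

definition strongly_convex_fun :: "real \<Rightarrow> (real \<Rightarrow> real) \<Rightarrow> bool" where
  "strongly_convex_fun m h \<longleftrightarrow> m > 0 \<and> convex_on UNIV (\<lambda>x. h x - m / 2 * x^2)"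

definition doubly_stochastic_sym :: "real^'n^'n \<Rightarrow> bool" where
  "doubly_stochastic_sym W \<longleftrightarrow> transpose W = W \<and> (\<forall>i j. W $ i $ j \<ge> 0) \<and>
     (\<forall>i. (\<Sum>j\<in>UNIV. W $ i $ j) = 1) \<and> (\<forall>j. (\<Sum>i\<in>UNIV. W $ i $ j) = 1)"

end

theory Submission
  imports Defs
begin

lemma smooth_deriv: "smooth_fun L h \<Longrightarrow> (h has_real_derivative deriv h x) (at x)"
  unfolding smooth_fun_def using DERIV_deriv_iff_real_differentiable by blast

lemma sc_mono:
  assumes "smooth_fun L h" "strongly_convex_fun m h"
  shows "(deriv h a - deriv h b) * (a - b) \<ge> m * (a - b)^2"
proof -
  define k where "k x = h x - m / 2 * x^2" for x
  have cv: "convex_on UNIV k" using assms(2) unfolding strongly_convex_fun_def k_def by simp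
  have dk: "(k has_real_derivative (deriv h c - m * c)) (at c within UNIV)" for c
    unfolding k_def
    by (rule derivative_eq_intros smooth_deriv[OF assms(1)] | simp)+
  have t1: "k a - k b \<ge> (deriv h b - m * b) * (a - b)"
    by (rule convex_on_imp_above_tangent[OF cv]) (auto intro: dk)
  have t2: "k b - k a \<ge> (deriv h a - m * a) * (b - a)"
    by (rule convex_on_imp_above_tangent[OF cv]) (auto intro: dk)
  from t1 t2 show ?thesis unfolding k_def power2_eq_square by (simp add: algebra_simps) 
qed

lemma smooth_lip: "smooth_fun L h \<Longrightarrow> \<bar>deriv h a - deriv h b\<bar> \<le> L * \<bar>a - b\<bar>"
  unfolding smooth_fun_def by blast

lemma smooth_L0: "smooth_fun L h \<Longrightarrow> 0 \<le> L"
  using smooth_lip[of L h 1 0] by simp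

lemma descent:
  assumes "smooth_fun L h"
  shows "h (a + t) \<le> h a + deriv h a * t + L * t^2"
proof -
  have D: "\<forall>x. DERIV h x :> deriv h x" using smooth_deriv[OF assms] by blast
  have L0: "0 \<le> L" by (rule smooth_L0[OF assms])
  consider "t = 0" | "t > 0" | "t < 0" by linarith
  then show ?thesis
  proof cases
    case 1 then show ?thesis by simp
  next
    case 2
    obtain z where z: "a < z" "z < a + t" "h (a + t) - h a = (a + t - a) * deriv h z"
      using MVT2[of a "a+t" h "deriv h"] 2 D by auto
    have "\<bar>deriv h z - deriv h a\<bar> \<le> L * \<bar>z - a\<bar>" by (rule smooth_lip[OF assms])
    also have "\<dots> \<le> L * t" using z L0 by (intro mult_left_mono) auto
    finally have "deriv h z - deriv h a \<le> L * t" by linarith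
    hence "t * (deriv h z - deriv h a) \<le> t * (L * t)" using 2 by (simp add: mult_left_mono)
    then show ?thesis using z by (simp add: power2_eq_square algebra_simps)
  next
    case 3
    obtain z where z: "a + t < z" "z < a" "h a - h (a + t) = (a - (a + t)) * deriv h z"
      using MVT2[of "a+t" a h "deriv h"] 3 D by auto
    have "\<bar>deriv h z - deriv h a\<bar> \<le> L * \<bar>z - a\<bar>" by (rule smooth_lip[OF assms])
    also have "\<dots> \<le> L * (-t)" using z L0 by (intro mult_left_mono) auto
    finally have "deriv h a - deriv h z \<le> L * (-t)" by linarith
    hence "(-t) * (deriv h a - deriv h z) \<le> (-t) * (L * (-t))" using 3 by (intro mult_left_mono) auto
    then show ?thesis using z by (simp add: power2_eq_square algebra_simps)
  qed
qed


lemma small_t: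
  fixes a b :: real
  assumes "\<And>t. 0 < t \<Longrightarrow> t \<le> 1 \<Longrightarrow> 0 \<le> a + t * b" "0 \<le> b"
  shows "0 \<le> a"
proof (rule ccontr)
  assume "\<not> 0 \<le> a"
  hence a: "a < 0" by simp
  define t where "t = min 1 ((-a) / (b + 1))"
  have "(-a) / (b + 1) > 0" using a assms(2) by (intro divide_pos_pos) auto
  hence t0: "0 < t" by (simp add: t_def)
  have t1: "t \<le> 1" by (simp add: t_def)
  have "t * b \<le> ((-a) / (b + 1)) * b" using assms(2) by (intro mult_right_mono) (auto simp: t_def)
  also have "\<dots> < -a" using a assms(2) by (simp add: field_simps)
  finally show False using assms(1)[OF t0 t1] by linarith
qed

lemma norm_sq_expand0: "(norm (u + t *\<^sub>R v))^2 = (norm u)^2 + 2 * t * (u \<bullet> v) + t^2 * (norm v)^2"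
  for u v :: "'a::real_inner"
  unfolding power2_norm_eq_inner
  by (simp add: inner_add_left inner_add_right inner_commute[of v u] power2_eq_square algebra_simps)

lemma norm_sq_expand: "(norm (p + t *\<^sub>R (z - p) - y))^2 = (norm (p - y))^2 + 2 * t * ((p - y) \<bullet> (z - p)) + t^2 * (norm (z - p))^2"
  for p z y :: "real^'n"
proof -
  have e: "p + t *\<^sub>R (z - p) - y = (p - y) + t *\<^sub>R (z - p)" by (simp add: algebra_simps)
  show ?thesis unfolding e by (rule norm_sq_expand0)
qed

locale proxctx =
  fixes G :: "real^'n \<Rightarrow> real" and K a :: real
  assumes cvx: "convex_on UNIV G"
    and lip: "\<And>u v. \<bar>G u - G v\<bar> \<le> K * norm (u - v)"
    and K0: "0 \<le> K" and a0: "0 < a"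
begin

definition H where "H y z = G z + (norm (z - y))^2 / (2*a)"

lemma vi_of_min:
  assumes min: "\<forall>z. H y p \<le> H y z"
  shows "G z \<ge> G p + ((y - p) \<bullet> (z - p)) / a"
proof -
  have "0 \<le> (G z - G p + ((p - y) \<bullet> (z - p)) / a) + t * ((norm (z - p))^2 / (2*a))"
    if t: "0 < t" "t \<le> 1" for t
  proof -
    let ?zt = "p + t *\<^sub>R (z - p)"
    have "?zt = (1 - t) *\<^sub>R p + t *\<^sub>R z" by (simp add: algebra_simps)
    hence gz: "G ?zt \<le> (1 - t) * G p + t * G z"
      using convex_onD[OF cvx, of t p z] t by simp
    have "H y p \<le> H y ?zt" using min by blast
    define A where "A = (norm (p - y))^2"
    define B where "B = 2 * t * ((p - y) \<bullet> (z - p)) + t^2 * (norm (z - p))^2"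
    have "G p + A / (2*a) \<le> (1 - t) * G p + t * G z + (A + B) / (2*a)"
    proof -
      have X: "H y ?zt = G ?zt + (A + B) / (2*a)"
        unfolding H_def norm_sq_expand A_def B_def by (simp add: add.assoc)
      have Y: "H y p = G p + A / (2*a)" unfolding H_def A_def by simp
      show ?thesis using gz \<open>H y p \<le> H y ?zt\<close> X Y by linarith
    qed
    moreover have "(A + B) / (2*a) = A / (2*a) + B / (2*a)" by (rule add_divide_distrib)
    ultimately have "0 \<le> t * (G z - G p) + B / (2*a)" by (simp add: algebra_simps)
    hence "0 \<le> t * (G z - G p) + (2 * t * ((p - y) \<bullet> (z - p)) + t^2 * (norm (z - p))^2) / (2*a)"
      by (simp add: B_def)
    also have "\<dots> = t * ((G z - G p + ((p - y) \<bullet> (z - p)) / a) + t * ((norm (z - p))^2 / (2*a)))"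
      using a0 by (simp add: field_simps power2_eq_square)
    finally show ?thesis using t by (simp add: zero_le_mult_iff)
  qed
  hence "0 \<le> G z - G p + ((p - y) \<bullet> (z - p)) / a"
    by (rule small_t) (use a0 in auto)
  moreover have "(p - y) \<bullet> (z - p) = - ((y - p) \<bullet> (z - p))" by (simp add: inner_diff_left)
  ultimately show ?thesis by (simp add: field_simps)
qed

lemma strict_of_vi:
  assumes vi: "\<forall>z. G z \<ge> G p + ((y - p) \<bullet> (z - p)) / a"
  shows "H y z \<ge> H y p + (norm (z - p))^2 / (2*a)"
proof -
  have e: "(norm (z - y))^2 = (norm (p - y))^2 + 2 * ((p - y) \<bullet> (z - p)) + (norm (z - p))^2"
    using norm_sq_expand[of p 1 z y] by simp
  have "G z \<ge> G p + ((y - p) \<bullet> (z - p)) / a" using vi by blast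
  moreover have "(p - y) \<bullet> (z - p) = - ((y - p) \<bullet> (z - p))" by (simp add: inner_diff_left)
  ultimately have g: "G z \<ge> G p - ((p - y) \<bullet> (z - p)) / a" by simp
  have "H y z = G z + (norm (p - y))^2 / (2*a) + ((p - y) \<bullet> (z - p)) / a + (norm (z - p))^2 / (2*a)"
    unfolding H_def e using a0 by (simp add: field_simps)
  then show ?thesis using g unfolding H_def by linarith
qed

lemma exists_min: "\<exists>p. \<forall>z. H y p \<le> H y z"
proof -
  define R where "R = 2 * a * K + 1"
  have cont: "continuous_on (cball y R) (H y)"
  proof -
    have "K-lipschitz_on UNIV G" using lip K0 by (auto simp: lipschitz_on_def dist_real_def dist_norm)
    hence "continuous_on (cball y R) G" using lipschitz_on_continuous_on continuous_on_subset by blast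
    then show ?thesis unfolding H_def using a0 by (intro continuous_intros) auto
  qed
  have R0: "0 \<le> R" using a0 K0 by (simp add: R_def)
  obtain p where p: "p \<in> cball y R" "\<forall>z\<in>cball y R. H y p \<le> H y z"
    using continuous_attains_inf[OF compact_cball _ cont] R0 by auto
  have "H y p \<le> H y z" for z
  proof (cases "z \<in> cball y R")
    case True then show ?thesis using p by blast
  next
    case False
    hence d: "norm (z - y) > R" by (simp add: dist_norm norm_minus_commute)
    have "G z \<ge> G y - K * norm (z - y)" using lip[of z y] by linarith
    moreover have "norm (z - y) * (norm (z - y) / (2*a) - K) > 0"
    proof -
      have "norm (z - y) / (2*a) > R / (2*a)" using d a0 by (simp add: divide_strict_right_mono)
      moreover have "R / (2*a) > K" using a0 by (simp add: R_def field_simps)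
      ultimately show ?thesis using d R0 by (intro mult_pos_pos) linarith+
    qed
    ultimately have "H y z > G y" unfolding H_def by (simp add: power2_eq_square field_simps)
    moreover have "H y y = G y" by (simp add: H_def)
    moreover have "H y p \<le> H y y" using p R0 by auto
    ultimately show ?thesis by linarith
  qed
  then show ?thesis by blast
qed

lemma prox_eq:
  assumes "\<forall>z. G z \<ge> G p + ((y - p) \<bullet> (z - p)) / a"
  shows "prox a G y = p"
  unfolding prox_def
proof (rule the_equality)
  show "\<forall>z. G p + (norm (p - y))\<^sup>2 / (2 * a) \<le> G z + (norm (z - y))\<^sup>2 / (2 * a)"
    using strict_of_vi[OF assms] a0 unfolding H_def
    by (smt (verit, ccfv_threshold) divide_nonneg_pos zero_le_power2)
next
  fix q assume q: "\<forall>z. G q + (norm (q - y))\<^sup>2 / (2 * a) \<le> G z + (norm (z - y))\<^sup>2 / (2 * a)"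
  hence "H y q \<le> H y p" unfolding H_def by blast
  moreover have "H y q \<ge> H y p + (norm (q - p))^2 / (2*a)" by (rule strict_of_vi[OF assms])
  ultimately have "(norm (q - p))^2 / (2*a) \<le> 0" by linarith
  hence "(norm (q - p))^2 \<le> 0" using a0 by (simp add: divide_le_0_iff)
  thus "q = p" by simp
qed

lemma prox_vi: "G z \<ge> G (prox a G y) + ((y - prox a G y) \<bullet> (z - prox a G y)) / a"
proof -
  obtain p where p: "\<forall>z. H y p \<le> H y z" using exists_min by blast
  have vi: "\<forall>z. G z \<ge> G p + ((y - p) \<bullet> (z - p)) / a" using vi_of_min[OF p] by blast
  show ?thesis using prox_eq[OF vi] vi by simp
qed

lemma prox_nonexp: "norm (prox a G y1 - prox a G y2) \<le> norm (y1 - y2)"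
proof -
  let ?p1 = "prox a G y1" and ?p2 = "prox a G y2"
  have 1: "G ?p2 \<ge> G ?p1 + ((y1 - ?p1) \<bullet> (?p2 - ?p1)) / a" by (rule prox_vi)
  have 2: "G ?p1 \<ge> G ?p2 + ((y2 - ?p2) \<bullet> (?p1 - ?p2)) / a" by (rule prox_vi)
  have "0 \<le> - ((y1 - ?p1) \<bullet> (?p2 - ?p1)) / a - ((y2 - ?p2) \<bullet> (?p1 - ?p2)) / a" using 1 2 by linarith
  hence "0 \<le> - ((y1 - ?p1) \<bullet> (?p2 - ?p1)) - ((y2 - ?p2) \<bullet> (?p1 - ?p2))" using a0
    by (simp add: field_simps)
  hence key: "(?p1 - ?p2) \<bullet> (?p1 - ?p2) \<le> (y1 - y2) \<bullet> (?p1 - ?p2)"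
    by (simp add: inner_diff_left inner_diff_right inner_commute algebra_simps)
  also have "\<dots> \<le> norm (y1 - y2) * norm (?p1 - ?p2)" by (rule norm_cauchy_schwarz)
  finally have "norm (?p1 - ?p2) * norm (?p1 - ?p2) \<le> norm (y1 - y2) * norm (?p1 - ?p2)"
    by (simp add: dot_square_norm power2_eq_square)
  thus ?thesis
    by (metis mult_right_le_imp_le norm_ge_zero order.order_iff_strict mult_zero_right zero_less_norm_iff norm_zero)
qed

lemma prox_close: "norm (prox a G y - y) \<le> a * K"
proof -
  let ?p = "prox a G y"
  have "G y \<ge> G ?p + ((y - ?p) \<bullet> (y - ?p)) / a" by (rule prox_vi)
  moreover have "G y - G ?p \<le> K * norm (y - ?p)" using lip[of y ?p] by linarith
  ultimately have "(norm (y - ?p))^2 / a \<le> K * norm (y - ?p)" by (simp add: power2_norm_eq_inner)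
  hence "(norm (y - ?p))^2 \<le> (a * K) * norm (y - ?p)" using a0 by (simp add: field_simps)
  hence "norm (y - ?p) \<le> a * K"
    by (metis mult_right_le_imp_le norm_ge_zero power2_eq_square order.order_iff_strict zero_less_norm_iff norm_zero mult_nonneg_nonneg a0 K0 less_imp_le)
  thus ?thesis by (simp add: norm_minus_commute)
qed

end


lemma Npos: "0 < real CARD('n::finite)" by simp

lemma avg_nth: "avg x $ i = (\<Sum>j\<in>UNIV. x $ j) / real CARD('n)" for x :: "real^'n::finite"
  by (simp add: avg_def)

lemma avg_const: "avg (\<chi> i. c :: real^'n::finite) = (\<chi> i. c)"
  by (simp add: vec_eq_iff avg_def)

lemma avg_add: "avg (x + y) = avg x + avg y" for x y :: "real^'n::finite"
  by (simp add: vec_eq_iff avg_def sum.distrib add_divide_distrib)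

lemma avg_diff: "avg (x - y) = avg x - avg y" for x y :: "real^'n::finite"
  by (simp add: vec_eq_iff avg_def sum_subtractf diff_divide_distrib)

lemma avg_scale: "avg (c *\<^sub>R x) = c *\<^sub>R avg x" for x :: "real^'n::finite"
  by (simp add: vec_eq_iff avg_def sum_distrib_left[symmetric])

lemma avg_is_const: "avg x = (\<chi> i. (\<Sum>j\<in>UNIV. x $ j) / real CARD('n))" for x :: "real^'n::finite"
  by (simp add: avg_def)

lemma avg_avg: "avg (avg x) = avg x" for x :: "real^'n::finite"
  by (subst (2) avg_is_const) (simp add: avg_is_const avg_const)

lemma inner_vec_sum: "x \<bullet> y = (\<Sum>i\<in>UNIV. x $ i * y $ i)" for x y :: "real^'n::finite"
  by (simp add: inner_vec_def)

lemma avg_inner: "avg v \<bullet> v = (\<Sum>j\<in>UNIV. v $ j)^2 / real CARD('n)" for v :: "real^'n::finite"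
  by (simp add: inner_vec_sum avg_def sum_divide_distrib[symmetric] sum_distrib_left[symmetric] power2_eq_square)

lemma avg_inner_avg: "avg v \<bullet> avg v = (\<Sum>j\<in>UNIV. v $ j)^2 / real CARD('n)" for v :: "real^'n::finite"
  by (simp add: inner_vec_sum avg_def power2_eq_square)

lemma avg_orth: "avg v \<bullet> (v - avg v) = 0" for v :: "real^'n::finite"
  by (simp add: inner_diff_right avg_inner avg_inner_avg)

lemma norm_avg_pyth: "(norm v)^2 = (norm (avg v))^2 + (norm (v - avg v))^2" for v :: "real^'n::finite"
proof -
  have "v = avg v + (v - avg v)" by simp
  hence "(norm v)^2 = (norm (avg v + (v - avg v)))^2" by metis
  also have "\<dots> = (norm (avg v))^2 + 2 * (avg v \<bullet> (v - avg v)) + (norm (v - avg v))^2"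
    using norm_sq_expand0[of "avg v" 1 "v - avg v"] by simp
  finally show ?thesis using avg_orth[of v] by simp
qed

lemma norm_avg_le: "norm (avg v) \<le> norm v" for v :: "real^'n::finite"
proof (rule power2_le_imp_le)
  show "(norm (avg v))^2 \<le> (norm v)^2" using norm_avg_pyth[of v] zero_le_power2[of "norm (v - avg v)"] by linarith
qed simp

lemma norm_P_le: "norm (v - avg v) \<le> norm v" for v :: "real^'n::finite"
proof (rule power2_le_imp_le)
  show "(norm (v - avg v))^2 \<le> (norm v)^2" using norm_avg_pyth[of v] zero_le_power2[of "norm (avg v)"] by linarith
qed simp

lemma Jmat_mult: "Jmat *v x = avg x" for x :: "real^'n::finite"
  by (simp add: vec_eq_iff Jmat_def avg_def matrix_vector_mult_def sum_divide_distrib)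

lemma W_const: "doubly_stochastic_sym W \<Longrightarrow> W *v (\<chi> i. c) = (\<chi> i. c)" for W :: "real^'n::finite^'n"
  by (simp add: vec_eq_iff matrix_vector_mult_def doubly_stochastic_sym_def sum_distrib_right[symmetric])

lemma W_avg: "doubly_stochastic_sym W \<Longrightarrow> W *v avg x = avg x" for W :: "real^'n::finite^'n"
  by (subst avg_is_const)+ (rule W_const)

lemma avg_W: "doubly_stochastic_sym W \<Longrightarrow> avg (W *v x) = avg x" for W :: "real^'n::finite^'n"
proof -
  assume ds: "doubly_stochastic_sym W"
  have "(\<Sum>i\<in>UNIV. (W *v x) $ i) = (\<Sum>i\<in>UNIV. \<Sum>j\<in>UNIV. W $ i $ j * x $ j)"
    by (simp add: matrix_vector_mult_def)
  also have "\<dots> = (\<Sum>j\<in>UNIV. \<Sum>i\<in>UNIV. W $ i $ j * x $ j)" by (rule sum.swap)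
  also have "\<dots> = (\<Sum>j\<in>UNIV. x $ j)"
    using ds by (simp add: sum_distrib_right[symmetric] doubly_stochastic_sym_def)
  finally show ?thesis by (simp add: avg_def)
qed

lemma sym_inner: "transpose S = S \<Longrightarrow> u \<bullet> (S *v v) = (S *v u) \<bullet> v" for S :: "real^'n::finite^'n"
  by (metis dot_lmul_matrix transpose_matrix_vector)

lemma W_sym: "doubly_stochastic_sym W \<Longrightarrow> transpose W = W"
  by (simp add: doubly_stochastic_sym_def)

lemma W_quad_le: "doubly_stochastic_sym W \<Longrightarrow> v \<bullet> (W *v v) \<le> v \<bullet> v" for W :: "real^'n::finite^'n"
proof -
  assume ds: "doubly_stochastic_sym W"
  have w0: "W $ i $ j \<ge> 0" for i j using ds by (simp add: doubly_stochastic_sym_def)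
  have "v \<bullet> (W *v v) = (\<Sum>i\<in>UNIV. \<Sum>j\<in>UNIV. W $ i $ j * (v $ i * v $ j))"
    unfolding inner_vec_sum matrix_vector_mult_def
    by (simp add: sum_distrib_left mult.commute mult.left_commute)
  also have "\<dots> \<le> (\<Sum>i\<in>UNIV. \<Sum>j\<in>UNIV. W $ i $ j * ((v $ i)^2 + (v $ j)^2) / 2)"
  proof (intro sum_mono)
    fix i j
    have "v $ i * v $ j \<le> ((v $ i)^2 + (v $ j)^2) / 2"
      using sum_squares_bound[of "v $ i" "v $ j"] by (simp add: power2_eq_square)
    hence "W $ i $ j * (v $ i * v $ j) \<le> W $ i $ j * (((v $ i)^2 + (v $ j)^2) / 2)"
      using w0[of i j] by (rule mult_left_mono)
    thus "W $ i $ j * (v $ i * v $ j) \<le> W $ i $ j * ((v $ i)^2 + (v $ j)^2) / 2"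
      by simp
  qed
  also have "\<dots> = (\<Sum>i\<in>UNIV. \<Sum>j\<in>UNIV. W $ i $ j * (v $ i)^2) / 2 + (\<Sum>i\<in>UNIV. \<Sum>j\<in>UNIV. W $ i $ j * (v $ j)^2) / 2"
  proof -
    have "(\<Sum>i\<in>UNIV. \<Sum>j\<in>UNIV. W $ i $ j * ((v $ i)^2 + (v $ j)^2) / 2)
       = (\<Sum>i\<in>UNIV. \<Sum>j\<in>UNIV. W $ i $ j * (v $ i)^2 / 2 + W $ i $ j * (v $ j)^2 / 2)"
      by (intro sum.cong refl) (simp add: distrib_left add_divide_distrib)
    also have "\<dots> = (\<Sum>i\<in>UNIV. \<Sum>j\<in>UNIV. W $ i $ j * (v $ i)^2 / 2) + (\<Sum>i\<in>UNIV. \<Sum>j\<in>UNIV. W $ i $ j * (v $ j)^2 / 2)"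
      by (simp only: sum.distrib)
    also have "\<dots> = (\<Sum>i\<in>UNIV. \<Sum>j\<in>UNIV. W $ i $ j * (v $ i)^2) / 2 + (\<Sum>i\<in>UNIV. \<Sum>j\<in>UNIV. W $ i $ j * (v $ j)^2) / 2"
      by (simp only: sum_divide_distrib)
    finally show ?thesis .
  qed
  also have "(\<Sum>i\<in>UNIV. \<Sum>j\<in>UNIV. W $ i $ j * (v $ i)^2) = (\<Sum>i\<in>UNIV. (v $ i)^2)"
    using ds by (simp add: sum_distrib_right[symmetric] doubly_stochastic_sym_def)
  also have "(\<Sum>i\<in>UNIV. \<Sum>j\<in>UNIV. W $ i $ j * (v $ j)^2) = (\<Sum>j\<in>UNIV. \<Sum>i\<in>UNIV. W $ i $ j * (v $ j)^2)"
    by (rule sum.swap)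
  also have "\<dots> = (\<Sum>j\<in>UNIV. (v $ j)^2)"
    using ds by (simp add: sum_distrib_right[symmetric] doubly_stochastic_sym_def)
  finally show ?thesis by (simp add: inner_vec_sum power2_eq_square)
qed

lemma rho_bound: "norm ((W - Jmat) *v v) \<le> rho W * norm v" for W :: "real^'n::finite^'n"
  unfolding rho_def by (rule onorm) simp

lemma WJ_dev: "doubly_stochastic_sym W \<Longrightarrow> (W - Jmat) *v (x - avg x) = W *v x - avg x"
  for W :: "real^'n::finite^'n"
  by (simp add: matrix_vector_mult_diff_rdistrib matrix_vector_mult_diff_distrib Jmat_mult W_avg avg_avg avg_diff)

lemma norm_const: "norm (\<chi> i. c :: real^'n::finite) = sqrt (real CARD('n)) * \<bar>c\<bar>"
proof -
  have "(norm (\<chi> i. c :: real^'n::finite))^2 = real CARD('n) * c^2"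
    unfolding power2_norm_eq_inner inner_vec_sum by (simp add: power2_eq_square)
  hence "norm (\<chi> i. c :: real^'n::finite) = sqrt (real CARD('n) * c^2)"
    by (metis norm_ge_zero real_sqrt_unique)
  thus ?thesis by (simp add: real_sqrt_mult)
qed

lemma norm_le_comp:
  fixes u v :: "real^'n::finite"
  assumes "\<And>i. \<bar>u $ i\<bar> \<le> K * \<bar>v $ i\<bar>" "0 \<le> K"
  shows "norm u \<le> K * norm v"
proof -
  have "u \<bullet> u \<le> (K *\<^sub>R v) \<bullet> (K *\<^sub>R v)"
    unfolding inner_vec_sum
  proof (intro sum_mono)
    fix i
    have "\<bar>u $ i\<bar> * \<bar>u $ i\<bar> \<le> (K * \<bar>v $ i\<bar>) * (K * \<bar>v $ i\<bar>)"
      using assms(1)[of i] by (intro mult_mono) auto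
    thus "u $ i * u $ i \<le> (K *\<^sub>R v) $ i * (K *\<^sub>R v) $ i" by (simp add: abs_mult_self_eq algebra_simps)
  qed
  hence "norm u \<le> norm (K *\<^sub>R v)" by (simp only: norm_le)
  thus ?thesis using assms(2) by (simp add: abs_of_nonneg)
qed



lemma sym_norm_bound:
  fixes S :: "real^'n::finite^'n"
  assumes sym: "transpose S = S" and q: "\<And>w. \<bar>w \<bullet> (S *v w)\<bar> \<le> M * (w \<bullet> w)"
  shows "norm (S *v v) \<le> M * norm v"
proof (cases "v = 0 \<or> S *v v = 0")
  case True
  then show ?thesis
  proof
    assume "v = 0" then show ?thesis by simp
  next
    assume Sv: "S *v v = 0"
    show ?thesis
    proof (cases "v = 0")
      case True then show ?thesis by simp
    next
      case False
      have "0 \<le> M * (v \<bullet> v)" using q[of v] by linarith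
      moreover have "v \<bullet> v > 0" using False by simp
      ultimately have "0 \<le> M" by (simp add: zero_le_mult_iff)
      then show ?thesis using Sv by simp
    qed
  qed
next
  case False
  hence v0: "v \<noteq> 0" and s0: "S *v v \<noteq> 0" by auto
  have pol: "4 * (u \<bullet> (S *v w)) \<le> 2 * M * (u \<bullet> u + w \<bullet> w)" for u w
  proof -
    have a: "(u + w) \<bullet> (S *v (u + w)) \<le> M * ((u + w) \<bullet> (u + w))" using q[of "u + w"] by linarith
    have b: "-((u - w) \<bullet> (S *v (u - w))) \<le> M * ((u - w) \<bullet> (u - w))" using q[of "u - w"] by linarith
    have sw: "w \<bullet> (S *v u) = u \<bullet> (S *v w)" using sym_inner[OF sym, of w u] by (simp add: inner_commute)
    have "(u + w) \<bullet> (S *v (u + w)) - (u - w) \<bullet> (S *v (u - w)) = 2 * (u \<bullet> (S *v w)) + 2 * (w \<bullet> (S *v u))"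
      by (simp add: matrix_vector_right_distrib matrix_vector_mult_diff_distrib inner_add_left inner_add_right
          inner_diff_left inner_diff_right)
    moreover have "(u + w) \<bullet> (u + w) + (u - w) \<bullet> (u - w) = 2 * (u \<bullet> u + w \<bullet> w)"
      by (simp add: inner_add_left inner_add_right inner_diff_left inner_diff_right inner_commute)
    ultimately show ?thesis using a b sw by (simp add: algebra_simps)
  qed
  define t where "t = norm v / norm (S *v v)"
  have t0: "t > 0" using v0 s0 by (simp add: t_def)
  have "4 * ((t *\<^sub>R (S *v v)) \<bullet> (S *v v)) \<le> 2 * M * ((t *\<^sub>R (S *v v)) \<bullet> (t *\<^sub>R (S *v v)) + v \<bullet> v)"
    by (rule pol)
  moreover have "(t *\<^sub>R (S *v v)) \<bullet> (S *v v) = t * (norm (S *v v))^2"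
    by (simp add: dot_square_norm)
  moreover have "(t *\<^sub>R (S *v v)) \<bullet> (t *\<^sub>R (S *v v)) = (norm v)^2"
  proof -
    have "(t *\<^sub>R (S *v v)) \<bullet> (t *\<^sub>R (S *v v)) = t^2 * (norm (S *v v))^2"
      by (simp add: dot_square_norm power2_eq_square)
    also have "\<dots> = (norm v)^2" using s0 by (simp add: t_def power_divide)
    finally show ?thesis .
  qed
  moreover have "t * (norm (S *v v))^2 = norm v * norm (S *v v)"
    using s0 by (simp add: t_def power2_eq_square)
  moreover have "v \<bullet> v = (norm v)^2" by (simp add: dot_square_norm)
  ultimately have "4 * (norm v * norm (S *v v)) \<le> 2 * M * (2 * (norm v)^2)"
    by (metis mult_2)
  hence "norm v * norm (S *v v) \<le> norm v * (M * norm v)" by (simp add: power2_eq_square algebra_simps)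
  thus ?thesis using v0 by simp
qed

lemma quad_homog: "(c *\<^sub>R v) \<bullet> (S *v (c *\<^sub>R v)) = c^2 * (v \<bullet> (S *v v))" for S :: "real^'n::finite^'n"
  by (simp only: matrix_vector_mult_scaleR inner_scaleR_left inner_scaleR_right power2_eq_square mult.assoc)

lemma rayleigh_min:
  fixes S :: "real^'n::finite^'n"
  assumes sym: "transpose S = S"
  shows "\<exists>u \<mu>. u \<noteq> 0 \<and> S *v u = \<mu> *s u \<and> (\<forall>v. v \<bullet> (S *v v) \<ge> \<mu> * (v \<bullet> v))"
proof -
  let ?q = "\<lambda>v. v \<bullet> (S *v v)"
  have cont: "continuous_on (sphere 0 1) ?q"
  proof -
    have "continuous_on UNIV (\<lambda>v. S *v v)" by (rule linear_continuous_on) simp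
    hence "continuous_on UNIV ?q" by (intro continuous_on_inner continuous_on_id)
    thus ?thesis by (rule continuous_on_subset) simp
  qed
  obtain u where u: "u \<in> sphere (0::real^'n) 1" "\<forall>y\<in>sphere 0 1. ?q u \<le> ?q y"
    using continuous_attains_inf[OF compact_sphere _ cont] by auto
  define \<mu> where "\<mu> = ?q u"
  have nu: "norm u = 1" using u by simp
  have lb: "?q v \<ge> \<mu> * (v \<bullet> v)" for v
  proof (cases "v = 0")
    case True then show ?thesis by simp
  next
    case False
    let ?w = "(1 / norm v) *\<^sub>R v"
    have "?w \<in> sphere 0 1" using False by simp
    hence "\<mu> \<le> ?q ?w" using u unfolding \<mu>_def by blast
    also have "\<dots> = (1 / norm v)^2 * ?q v" by (rule quad_homog)
    finally have "\<mu> * (norm v)^2 \<le> (1 / norm v)^2 * ?q v * (norm v)^2"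
      by (simp add: mult_right_mono)
    also have "\<dots> = ?q v" using False by (simp add: power2_eq_square field_simps)
    finally show ?thesis by (simp add: power2_norm_eq_inner)
  qed
  define r where "r = S *v u - \<mu> *\<^sub>R u"
  define C where "C = ?q r - \<mu> * (r \<bullet> r)"
  have C0: "0 \<le> C" using lb[of r] by (simp add: C_def)
  have sw: "r \<bullet> (S *v u) = u \<bullet> (S *v r)" using sym_inner[OF sym, of u r] by (simp add: inner_commute)
  have uu: "u \<bullet> u = 1" using nu by (simp add: dot_square_norm)
  have expand: "?q (u - t *\<^sub>R r) - \<mu> * ((u - t *\<^sub>R r) \<bullet> (u - t *\<^sub>R r)) = - 2 * t * (r \<bullet> r) + t^2 * C" for t
  proof -
    have Sd: "S *v (u - t *\<^sub>R r) = S *v u - t *\<^sub>R (S *v r)"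
      by (simp add: matrix_vector_mult_diff_distrib matrix_vector_mult_scaleR)
    have "?q (u - t *\<^sub>R r) = u \<bullet> (S *v u) - t * (u \<bullet> (S *v r)) - t * (r \<bullet> (S *v u)) + t * t * (r \<bullet> (S *v r))"
      unfolding Sd by (simp add: inner_diff_left inner_diff_right algebra_simps)
    hence E1: "?q (u - t *\<^sub>R r) = \<mu> - 2 * t * (r \<bullet> (S *v u)) + t^2 * ?q r"
      using sw unfolding \<mu>_def by (simp add: power2_eq_square)
    have "(u - t *\<^sub>R r) \<bullet> (u - t *\<^sub>R r) = u \<bullet> u - t * (u \<bullet> r) - t * (r \<bullet> u) + t * t * (r \<bullet> r)"
      by (simp add: inner_diff_left inner_diff_right algebra_simps)
    hence E2: "(u - t *\<^sub>R r) \<bullet> (u - t *\<^sub>R r) = 1 - 2 * t * (r \<bullet> u) + t^2 * (r \<bullet> r)"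
      using uu by (simp add: inner_commute power2_eq_square)
    have E3: "r \<bullet> (S *v u) = r \<bullet> r + \<mu> * (r \<bullet> u)"
      by (simp add: r_def inner_diff_right)
    show ?thesis unfolding E1 E2 E3 C_def by (simp add: algebra_simps)
  qed
  have "0 \<le> - 2 * (r \<bullet> r) + t * C" if "0 < t" "t \<le> 1" for t
  proof -
    have "0 \<le> - 2 * t * (r \<bullet> r) + t^2 * C" using lb[of "u - t *\<^sub>R r"] expand[of t] by linarith
    also have "\<dots> = t * (- 2 * (r \<bullet> r) + t * C)" by (simp add: power2_eq_square algebra_simps)
    finally show ?thesis using that by (simp add: zero_le_mult_iff)
  qed
  hence "0 \<le> - 2 * (r \<bullet> r)" by (rule small_t) (use C0 in auto)
  hence "r \<bullet> r = 0" using inner_ge_zero[of r] by linarith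
  hence "r = 0" by simp
  hence "S *v u = \<mu> *s u" by (simp add: r_def scalar_mult_eq_scaleR)
  moreover have "u \<noteq> 0" using nu by auto
  ultimately show ?thesis using lb by blast
qed

lemma eig_finite:
  fixes S :: "real^'n::finite^'n"
  assumes sym: "transpose S = S"
  shows "finite {l. \<exists>v::real^'n. v \<noteq> 0 \<and> S *v v = l *s v}"
proof -
  let ?E = "{l. \<exists>v::real^'n. v \<noteq> 0 \<and> S *v v = l *s v}"
  define ev where "ev l = (SOME v::real^'n. v \<noteq> 0 \<and> S *v v = l *s v)" for l
  have ev: "ev l \<noteq> 0 \<and> S *v ev l = l *\<^sub>R ev l" if "l \<in> ?E" for l
    using someI_ex[of "\<lambda>v. v \<noteq> 0 \<and> S *v v = l *s v"] that unfolding ev_def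
    by (auto simp: scalar_mult_eq_scaleR)
  have orth: "ev l1 \<bullet> ev l2 = 0" if "l1 \<in> ?E" "l2 \<in> ?E" "l1 \<noteq> l2" for l1 l2
  proof -
    have "l2 * (ev l1 \<bullet> ev l2) = ev l1 \<bullet> (S *v ev l2)" using ev[OF that(2)] by simp
    also have "\<dots> = (S *v ev l1) \<bullet> ev l2" by (rule sym_inner[OF sym])
    also have "\<dots> = l1 * (ev l1 \<bullet> ev l2)" using ev[OF that(1)] by simp
    finally show ?thesis using that(3) by simp
  qed
  have inj: "inj_on ev ?E"
  proof
    fix l1 l2 assume a: "l1 \<in> ?E" "l2 \<in> ?E" "ev l1 = ev l2"
    show "l1 = l2"
    proof (rule ccontr)
      assume "l1 \<noteq> l2"
      hence "ev l1 \<bullet> ev l2 = 0" using orth a by blast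
      thus False using a ev[OF a(1)] by simp
    qed
  qed
  have "pairwise orthogonal (ev ` ?E)"
    unfolding pairwise_def orthogonal_def using orth by auto
  hence "finite (ev ` ?E)" by (rule pairwise_orthogonal_imp_finite)
  thus ?thesis using inj finite_imageD by blast
qed

lemma lambda_min_props:
  fixes W :: "real^'n::finite^'n"
  assumes ds: "doubly_stochastic_sym W"
  shows "lambda_min W \<le> 1" "\<And>v::real^'n. v \<bullet> (W *v v) \<ge> lambda_min W * (v \<bullet> v)"
proof -
  let ?E = "{l. \<exists>v::real^'n. v \<noteq> 0 \<and> W *v v = l *s v}"
  have sym: "transpose W = W" by (rule W_sym[OF ds])
  have fin: "finite ?E" by (rule eig_finite[OF sym])
  have "(\<chi> i. (1::real)) \<noteq> (0::real^'n)" by (simp add: vec_eq_iff)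
  moreover have "W *v (\<chi> i. (1::real)) = (1::real) *s (\<chi> i. (1::real))" using W_const[OF ds, of 1] by (simp add: scalar_mult_eq_scaleR)
  ultimately have "1 \<in> ?E" by blast
  thus "lambda_min W \<le> 1" unfolding lambda_min_def using fin by (rule Min_le[rotated])
  obtain u \<mu> where u: "u \<noteq> 0" "W *v u = \<mu> *s u" "\<forall>v. v \<bullet> (W *v v) \<ge> \<mu> * (v \<bullet> v)"
    using rayleigh_min[OF sym] by blast
  have "\<mu> \<in> ?E" using u by blast
  hence "lambda_min W \<le> \<mu>" unfolding lambda_min_def using fin by (rule Min_le[rotated])
  fix v :: "real^'n"
  have "lambda_min W * (v \<bullet> v) \<le> \<mu> * (v \<bullet> v)"
    using \<open>lambda_min W \<le> \<mu>\<close> by (simp add: mult_right_mono)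
  thus "v \<bullet> (W *v v) \<ge> lambda_min W * (v \<bullet> v)" using u(3)[rule_format, of v] by linarith
qed



lemma small_t': 
  fixes a b :: real
  assumes "\<And>t. 0 < t \<Longrightarrow> t \<le> 1 \<Longrightarrow> 0 \<le> a + t * b"
  shows "0 \<le> a"
proof (rule small_t[of a "max b 0"])
  fix t :: real assume t: "0 < t" "t \<le> 1"
  have "t * b \<le> t * max b 0" using t by (intro mult_left_mono) auto
  thus "0 \<le> a + t * max b 0" using assms[OF t] by linarith
qed simp

lemma contr_scalar:
  fixes m L s al :: real
  assumes m0: "0 < m" and ms: "m \<le> s" and sL: "s \<le> L" and a0: "0 < al" and al: "al < 2 / (L + m)"
  shows "(1 - al * s)^2 \<le> 1 - 2 * al * m * L / (m + L)"
proof -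
  have mL: "0 < m + L" using m0 ms sL by linarith
  define \<beta> where "\<beta> = al * (m + L)"
  have b2: "\<beta> < 2" using al mL by (simp add: \<beta>_def field_simps)
  have b0: "0 \<le> \<beta>" using a0 mL by (simp add: \<beta>_def)
  define B where "B = \<beta> * s^2 - 2 * (m + L) * s + 2 * m * L"
  have Bid: "B = \<beta> * ((s - m) * (s - L)) - (2 - \<beta>) * ((m + L) * s - m * L)"
    by (simp add: B_def power2_eq_square algebra_simps)
  have p1: "(s - m) * (s - L) \<le> 0" using ms sL by (simp add: mult_nonneg_nonpos)
  have "(m + L) * s \<ge> (m + L) * m" using ms mL by (simp add: mult_left_mono)
  moreover have "(m + L) * m - m * L = m * m" by (simp add: algebra_simps)
  moreover have "0 < m * m" using m0 by simp
  ultimately have p2: "(m + L) * s - m * L \<ge> 0" by linarith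
  have "\<beta> * ((s - m) * (s - L)) \<le> 0" using p1 b0 by (simp add: mult_nonneg_nonpos)
  moreover have "(2 - \<beta>) * ((m + L) * s - m * L) \<ge> 0" using p2 b2 by simp
  ultimately have B0: "B \<le> 0" using Bid by linarith
  have "(1 - al * s)^2 * (m + L) - ((m + L) - 2 * al * m * L) = al * B"
    by (simp add: B_def \<beta>_def power2_eq_square algebra_simps)
  also have "\<dots> \<le> 0" using a0 B0 by (simp add: mult_nonneg_nonpos)
  finally have "(1 - al * s)^2 * (m + L) \<le> (m + L) - 2 * al * m * L" by linarith
  thus ?thesis using mL by (simp add: field_simps)
qed

locale setting =
  fixes W :: "real^'n::finite^'n"
    and f g :: "'n \<Rightarrow> real \<Rightarrow> real"
    and Lfi mfi :: "'n \<Rightarrow> real"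
    and Lg alpha xstar :: real
    and xt :: "real^'n"
  assumes W_ds: "doubly_stochastic_sym W"
    and f_smooth: "\<forall>i. smooth_fun (Lfi i) (f i)"
    and f_sc: "\<forall>i. strongly_convex_fun (mfi i) (f i)"
    and g_convex: "\<forall>i. convex_on UNIV (g i)"
    and Lg_nonneg: "Lg \<ge> 0"
    and Lg_lip: "\<forall>u v. \<bar>sepsum g u - sepsum g v\<bar> \<le> Lg * norm (u - v)"
    and xstar_min: "\<forall>y. (\<Sum>i\<in>UNIV. f i xstar + g i xstar) \<le> (\<Sum>i\<in>UNIV. f i y + g i y)"
    and xt_min: "\<forall>z. (1/2) * (xt \<bullet> (xt - W *v xt)) + alpha * sepsum f xt + alpha * sepsum g xt
                   \<le> (1/2) * (z \<bullet> (z - W *v z)) + alpha * sepsum f z + alpha * sepsum g z"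
    and alpha_pos: "0 < alpha"
    and alpha_lt: "alpha < min ((1 + lambda_min W) / Max (range Lfi)) (2 / (Max (range Lfi) + Min (range mfi)))"
begin

definition "LL = Max (range Lfi)"
definition "mm = Min (range mfi)"

lemma sm: "smooth_fun (Lfi i) (f i)" using f_smooth by blast
lemma sc: "strongly_convex_fun (mfi i) (f i)" using f_sc by blast

lemma mfi_pos: "0 < mfi i" using sc[of i] by (simp add: strongly_convex_fun_def)

lemma mfi_le_Lfi: "mfi i \<le> Lfi i"
proof -
  have "mfi i * (1 - 0)^2 \<le> (deriv (f i) 1 - deriv (f i) 0) * (1 - 0)" by (rule sc_mono[OF sm sc])
  also have "\<dots> \<le> \<bar>deriv (f i) 1 - deriv (f i) 0\<bar>" by simp
  also have "\<dots> \<le> Lfi i * \<bar>1 - 0\<bar>" by (rule smooth_lip[OF sm])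
  finally show ?thesis by simp
qed

lemma Lfi_le: "Lfi i \<le> LL" unfolding LL_def by (rule Max_ge) auto
lemma mm_le: "mm \<le> mfi i" unfolding mm_def by (rule Min_le) auto
lemma mm_pos: "0 < mm"
proof -
  have "mm \<in> range mfi" unfolding mm_def by (rule Min_in) auto
  thus ?thesis using mfi_pos by auto
qed
lemma mm_le_LL: "mm \<le> LL" using mm_le[of undefined] mfi_le_Lfi[of undefined] Lfi_le[of undefined] by linarith
lemma LL_pos: "0 < LL" using mm_pos mm_le_LL by linarith
lemma Lfi_nonneg: "0 \<le> Lfi i" using mfi_pos[of i] mfi_le_Lfi[of i] by linarith

lemma alpha_lt1: "alpha < (1 + lambda_min W) / LL" using alpha_lt by (simp add: LL_def)
lemma alpha_lt2: "alpha < 2 / (LL + mm)" using alpha_lt by (simp add: LL_def mm_def)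

lemma lmin_le1: "lambda_min W \<le> 1" by (rule lambda_min_props(1)[OF W_ds])
lemma lmin_quad: "v \<bullet> (W *v v) \<ge> lambda_min W * (v \<bullet> v)" by (rule lambda_min_props(2)[OF W_ds])

definition "kappa = 2 * alpha * mm * LL / (mm + LL)"

lemma kappa_bounds: "0 < kappa" "kappa < 1"
proof -
  show "0 < kappa" using alpha_pos mm_pos LL_pos by (simp add: kappa_def)
  have "(mm + LL)^2 \<ge> 4 * mm * LL"
  proof -
    have "(mm + LL)^2 - 4 * mm * LL = (mm - LL)^2" by (simp add: power2_eq_square algebra_simps)
    thus ?thesis by (metis diff_ge_0_iff_ge zero_le_power2)
  qed
  have s: "0 < mm + LL" using mm_pos LL_pos by simp
  have "alpha * (2 * mm * LL) < (2 / (LL + mm)) * (2 * mm * LL)"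
    using alpha_lt2 mm_pos LL_pos by (intro mult_strict_right_mono) auto
  hence "2 * alpha * mm * LL < 2 * (2 / (LL + mm)) * mm * LL" by (simp add: algebra_simps)
  also have "\<dots> = 4 * mm * LL / (mm + LL)" by (simp add: algebra_simps)
  also have "\<dots> \<le> (mm + LL)^2 / (mm + LL)" using \<open>(mm + LL)^2 \<ge> 4 * mm * LL\<close> s
    by (simp add: divide_right_mono)
  also have "\<dots> = mm + LL" using s by (simp add: power2_eq_square)
  finally show "kappa < 1" unfolding kappa_def using s by (simp add: field_simps)
qed

lemma c_bounds: "0 < sqrt (1 - kappa)" "sqrt (1 - kappa) < 1"
  using kappa_bounds by auto

lemma contr1: "mm \<le> s \<Longrightarrow> s \<le> LL \<Longrightarrow> \<bar>1 - alpha * s\<bar> \<le> sqrt (1 - kappa)"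
proof -
  assume a: "mm \<le> s" "s \<le> LL"
  have "(1 - alpha * s)^2 \<le> 1 - kappa" unfolding kappa_def
    by (rule contr_scalar[OF mm_pos a alpha_pos]) (use alpha_lt2 in \<open>simp add: add.commute\<close>)
  thus ?thesis by (metis real_sqrt_abs real_sqrt_le_mono)
qed

definition "zeta = max \<bar>1 - (1 - lambda_min W + alpha * LL)\<bar> \<bar>1 - alpha * mm\<bar>"

lemma zeta_bounds: "0 < zeta" "zeta < 1"
proof -
  have "alpha * mm < 1"
  proof -
    have "alpha * mm < (2 / (LL + mm)) * mm" using alpha_lt2 mm_pos by (intro mult_strict_right_mono) auto
    also have "\<dots> \<le> 1" using mm_pos mm_le_LL by (simp add: field_simps)
    finally show ?thesis .
  qed
  moreover have "0 < alpha * mm" using alpha_pos mm_pos by simp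
  ultimately have A: "0 < \<bar>1 - alpha * mm\<bar>" "\<bar>1 - alpha * mm\<bar> < 1" by auto
  have "alpha * LL < 1 + lambda_min W" using alpha_lt1 LL_pos by (simp add: field_simps)
  moreover have "0 < alpha * LL" using alpha_pos LL_pos by simp
  ultimately have B: "\<bar>1 - (1 - lambda_min W + alpha * LL)\<bar> < 1" using lmin_le1 by auto
  show "0 < zeta" using A by (simp add: zeta_def)
  show "zeta < 1" using A B by (simp add: zeta_def)
qed

end


lemma sepsum_convex:
  assumes "\<forall>i. convex_on UNIV (g i)"
  shows "convex_on UNIV (sepsum g :: real^'n::finite \<Rightarrow> real)"
proof (rule convex_onI)
  fix t :: real and x y :: "real^'n" assume t: "0 < t" "t < 1"
  have "sepsum g ((1 - t) *\<^sub>R x + t *\<^sub>R y) = (\<Sum>i\<in>UNIV. g i ((1 - t) *\<^sub>R (x $ i) + t *\<^sub>R (y $ i)))"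
    by (simp add: sepsum_def)
  also have "\<dots> \<le> (\<Sum>i\<in>UNIV. (1 - t) * g i (x $ i) + t * g i (y $ i))"
    using assms t by (intro sum_mono convex_onD) auto
  also have "\<dots> = (1 - t) * sepsum g x + t * sepsum g y"
    by (simp add: sepsum_def sum.distrib sum_distrib_left)
  finally show "sepsum g ((1 - t) *\<^sub>R x + t *\<^sub>R y) \<le> (1 - t) * sepsum g x + t * sepsum g y" .
qed simp

context setting
begin

lemma G_convex: "convex_on UNIV (sepsum g)" by (rule sepsum_convex[OF g_convex])

lemma G_lip: "\<bar>sepsum g u - sepsum g v\<bar> \<le> Lg * norm (u - v)" using Lg_lip by blast

lemma proxctx: "proxctx (sepsum g) Lg alpha"
  by unfold_locales (use G_convex G_lip Lg_nonneg alpha_pos in auto)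

lemma F_descent: "sepsum f (x + t *\<^sub>R d) \<le> sepsum f x + t * (grad f x \<bullet> d) + t^2 * (\<Sum>i\<in>UNIV. Lfi i * (d $ i)^2)"
proof -
  have "sepsum f (x + t *\<^sub>R d) = (\<Sum>i\<in>UNIV. f i (x $ i + t * d $ i))" by (simp add: sepsum_def)
  also have "\<dots> \<le> (\<Sum>i\<in>UNIV. f i (x $ i) + deriv (f i) (x $ i) * (t * d $ i) + Lfi i * (t * d $ i)^2)"
    by (intro sum_mono descent[OF sm])
  also have "\<dots> = sepsum f x + t * (grad f x \<bullet> d) + t^2 * (\<Sum>i\<in>UNIV. Lfi i * (d $ i)^2)"
    by (simp add: sepsum_def grad_def inner_vec_sum sum.distrib sum_distrib_left power_mult_distrib
        algebra_simps)
  finally show ?thesis .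
qed

lemma Q_expand: "(1/2) * ((x + t *\<^sub>R d) \<bullet> ((x + t *\<^sub>R d) - W *v (x + t *\<^sub>R d)))
   = (1/2) * (x \<bullet> (x - W *v x)) + t * (d \<bullet> (x - W *v x)) + t^2 * ((1/2) * (d \<bullet> (d - W *v d)))"
proof -
  have sw: "x \<bullet> (W *v d) = d \<bullet> (W *v x)"
    using sym_inner[OF W_sym[OF W_ds], of x d] by (simp add: inner_commute)
  have "(x + t *\<^sub>R d) - W *v (x + t *\<^sub>R d) = (x - W *v x) + t *\<^sub>R (d - W *v d)"
    by (simp add: matrix_vector_right_distrib matrix_vector_mult_scaleR algebra_simps)
  hence "(x + t *\<^sub>R d) \<bullet> ((x + t *\<^sub>R d) - W *v (x + t *\<^sub>R d))
     = x \<bullet> (x - W *v x) + t * (x \<bullet> d) - t * (x \<bullet> (W *v d)) + t * (d \<bullet> (x - W *v x)) + t * t * (d \<bullet> (d - W *v d))"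
    by (simp add: inner_add_left inner_add_right inner_diff_right algebra_simps)
  also have "\<dots> = x \<bullet> (x - W *v x) + 2 * t * (d \<bullet> (x - W *v x)) + t * t * (d \<bullet> (d - W *v d))"
    using sw by (simp add: inner_diff_right inner_commute algebra_simps)
  finally show ?thesis by (simp add: power2_eq_square algebra_simps)
qed

lemma xstar_grad: "\<bar>\<Sum>i\<in>UNIV. deriv (f i) xstar\<bar> \<le> Lg * sqrt (real CARD('n))"
proof -
  define \<sigma> where "\<sigma> = (\<Sum>i\<in>UNIV. deriv (f i) xstar)"
  define L' where "L' = (\<Sum>i\<in>UNIV. Lfi i)"
  define K where "K = Lg * sqrt (real CARD('n))"
  have key: "0 \<le> \<sigma> * h + L' * h^2 + K * \<bar>h\<bar>" for h
  proof -
    have m: "(\<Sum>i\<in>UNIV. f i xstar + g i xstar) \<le> (\<Sum>i\<in>UNIV. f i (xstar + h) + g i (xstar + h))"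
      using xstar_min by blast
    have fd: "(\<Sum>i\<in>UNIV. f i (xstar + h)) \<le> (\<Sum>i\<in>UNIV. f i xstar + deriv (f i) xstar * h + Lfi i * h^2)"
      by (intro sum_mono descent[OF sm])
    have gs: "(\<Sum>i\<in>UNIV. g i y) = sepsum g (\<chi> i. y)" for y by (simp add: sepsum_def)
    have "(\<chi> i. xstar + h) - (\<chi> i. xstar) = (\<chi> i. h :: real^'n)" by (simp add: vec_eq_iff)
    hence "sepsum g (\<chi> i. xstar + h) - sepsum g (\<chi> i. xstar) \<le> Lg * (sqrt (real CARD('n)) * \<bar>h\<bar>)"
      using G_lip[of "\<chi> i. xstar + h" "\<chi> i. xstar"] norm_const[where 'n='n, of h] by simp
    hence gd: "(\<Sum>i\<in>UNIV. g i (xstar + h)) - (\<Sum>i\<in>UNIV. g i xstar) \<le> K * \<bar>h\<bar>"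
      unfolding gs K_def by simp
    have "(\<Sum>i\<in>UNIV. f i xstar + deriv (f i) xstar * h + Lfi i * h^2)
        = (\<Sum>i\<in>UNIV. f i xstar) + \<sigma> * h + L' * h^2"
      by (simp add: \<sigma>_def L'_def sum.distrib sum_distrib_right)
    thus ?thesis using m fd gd by (simp add: sum.distrib)
  qed
  have L'0: "0 \<le> L'" unfolding L'_def by (intro sum_nonneg) (simp add: Lfi_nonneg)
  have "\<sigma> \<le> K"
  proof -
    have "0 \<le> (K - \<sigma>) + t * L'" if "0 < t" "t \<le> 1" for t
    proof -
      have "0 \<le> \<sigma> * (-t) + L' * (-t)^2 + K * \<bar>-t\<bar>" by (rule key)
      also have "\<dots> = t * ((K - \<sigma>) + t * L')" using that by (simp add: power2_eq_square algebra_simps)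
      finally show ?thesis using that by (simp add: zero_le_mult_iff)
    qed
    hence "0 \<le> K - \<sigma>" by (rule small_t')
    thus ?thesis by simp
  qed
  moreover have "-\<sigma> \<le> K"
  proof -
    have "0 \<le> (K + \<sigma>) + t * L'" if "0 < t" "t \<le> 1" for t
    proof -
      have "0 \<le> \<sigma> * t + L' * t^2 + K * \<bar>t\<bar>" by (rule key)
      also have "\<dots> = t * ((K + \<sigma>) + t * L')" using that by (simp add: power2_eq_square algebra_simps)
      finally show ?thesis using that by (simp add: zero_le_mult_iff)
    qed
    hence "0 \<le> K + \<sigma>" by (rule small_t')
    thus ?thesis by simp
  qed
  ultimately show ?thesis unfolding \<sigma>_def K_def by linarith
qed

definition "yt = W *v xt - alpha *\<^sub>R grad f xt"

lemma xt_subgrad: "sepsum g z \<ge> sepsum g xt + ((yt - xt) \<bullet> (z - xt)) / alpha"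
proof -
  define d where "d = z - xt"
  define a where "a = d \<bullet> (xt - W *v xt) + alpha * (grad f xt \<bullet> d) + alpha * (sepsum g z - sepsum g xt)"
  define b where "b = (1/2) * (d \<bullet> (d - W *v d)) + alpha * (\<Sum>i\<in>UNIV. Lfi i * (d $ i)^2)"
  have "0 \<le> a + t * b" if t: "0 < t" "t \<le> 1" for t
  proof -
    have m: "(1/2) * (xt \<bullet> (xt - W *v xt)) + alpha * sepsum f xt + alpha * sepsum g xt
         \<le> (1/2) * ((xt + t *\<^sub>R d) \<bullet> ((xt + t *\<^sub>R d) - W *v (xt + t *\<^sub>R d))) + alpha * sepsum f (xt + t *\<^sub>R d)
            + alpha * sepsum g (xt + t *\<^sub>R d)"
      using xt_min by blast
    have F: "alpha * sepsum f (xt + t *\<^sub>R d) \<le> alpha * (sepsum f xt + t * (grad f xt \<bullet> d) + t^2 * (\<Sum>i\<in>UNIV. Lfi i * (d $ i)^2))"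
      using F_descent alpha_pos by (intro mult_left_mono) auto
    have "xt + t *\<^sub>R d = (1 - t) *\<^sub>R xt + t *\<^sub>R z" by (simp add: d_def algebra_simps)
    hence "sepsum g (xt + t *\<^sub>R d) \<le> (1 - t) * sepsum g xt + t * sepsum g z"
      using convex_onD[OF G_convex, of t xt z] t by simp
    hence G: "alpha * sepsum g (xt + t *\<^sub>R d) \<le> alpha * ((1 - t) * sepsum g xt + t * sepsum g z)"
      using alpha_pos by (intro mult_left_mono) auto
    have "0 \<le> t * (d \<bullet> (xt - W *v xt)) + t^2 * ((1/2) * (d \<bullet> (d - W *v d)))
          + alpha * (t * (grad f xt \<bullet> d) + t^2 * (\<Sum>i\<in>UNIV. Lfi i * (d $ i)^2))
          + alpha * (t * (sepsum g z - sepsum g xt))"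
      using m F G unfolding Q_expand by (simp add: algebra_simps)
    also have "\<dots> = t * (a + t * b)" by (simp add: a_def b_def power2_eq_square algebra_simps)
    finally show ?thesis using t by (simp add: zero_le_mult_iff)
  qed
  hence a0: "0 \<le> a" by (rule small_t')
  have E: "yt - xt = - ((xt - W *v xt) + alpha *\<^sub>R grad f xt)" by (simp add: yt_def algebra_simps)
  have e1: "(yt - xt) \<bullet> (z - xt) = d \<bullet> (yt - xt)" by (simp add: d_def inner_commute)
  have e2: "d \<bullet> (yt - xt) = - (d \<bullet> (xt - W *v xt) + alpha * (d \<bullet> grad f xt))"
    unfolding E by (simp only: inner_minus_right inner_add_right inner_scaleR_right)
  have e3: "grad f xt \<bullet> d = d \<bullet> grad f xt" by (rule inner_commute)
  have "(yt - xt) \<bullet> (z - xt) = - (d \<bullet> (xt - W *v xt) + alpha * (grad f xt \<bullet> d))"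
    unfolding e1 e2 e3 ..
  hence "(yt - xt) \<bullet> (z - xt) \<le> alpha * (sepsum g z - sepsum g xt)" using a0 unfolding a_def by linarith
  hence "((yt - xt) \<bullet> (z - xt)) / alpha \<le> sepsum g z - sepsum g xt" using alpha_pos by (simp add: field_simps)
  thus ?thesis by linarith
qed

lemma prox_fix: "prox alpha (sepsum g) yt = xt"
  using proxctx.prox_eq[OF proxctx] xt_subgrad by blast

lemma yt_close: "norm (xt - W *v xt + alpha *\<^sub>R grad f xt) \<le> alpha * Lg"
proof -
  have "norm (prox alpha (sepsum g) yt - yt) \<le> alpha * Lg" by (rule proxctx.prox_close[OF proxctx])
  moreover have "prox alpha (sepsum g) yt - yt = xt - yt" by (simp only: prox_fix)
  moreover have "xt - yt = xt - W *v xt + alpha *\<^sub>R grad f xt" by (simp add: yt_def algebra_simps)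
  ultimately show ?thesis by simp
qed

end


lemma norm5: "norm (a + b - c - d + e) \<le> norm a + norm b + norm c + norm d + norm (e::'a::real_normed_vector)"
proof -
  have "norm (a + b - c - d + e) \<le> norm (a + b - c - d) + norm e" by (rule norm_triangle_ineq)
  moreover have "norm (a + b - c - d) \<le> norm (a + b - c) + norm d" by (rule norm_triangle_ineq4)
  moreover have "norm (a + b - c) \<le> norm (a + b) + norm c" by (rule norm_triangle_ineq4)
  moreover have "norm (a + b) \<le> norm a + norm b" by (rule norm_triangle_ineq)
  ultimately show ?thesis by linarith
qed

context setting
begin

lemma slope_bounds:
  assumes "a \<noteq> b"
  shows "mm \<le> (deriv (f i) a - deriv (f i) b) / (a - b)" "(deriv (f i) a - deriv (f i) b) / (a - b) \<le> LL"
proof -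
  define q where "q = (deriv (f i) a - deriv (f i) b) / (a - b)"
  have ab: "a - b \<noteq> 0" using assms by simp
  have qe: "deriv (f i) a - deriv (f i) b = q * (a - b)" using ab by (simp add: q_def)
  have "mfi i * (a - b)^2 \<le> q * (a - b) * (a - b)" using sc_mono[OF sm sc, of i a b] qe by simp
  hence "mfi i * (a - b)^2 \<le> q * (a - b)^2" by (simp add: power2_eq_square mult.assoc)
  moreover have "(a - b)^2 > 0" using ab by simp
  ultimately have "mfi i \<le> q" by simp
  thus "mm \<le> q" using mm_le[of i] by linarith
  have "\<bar>q * (a - b)\<bar> \<le> Lfi i * \<bar>a - b\<bar>" using smooth_lip[OF sm, of i a b] qe by simp
  hence "\<bar>q\<bar> * \<bar>a - b\<bar> \<le> Lfi i * \<bar>a - b\<bar>" by (simp add: abs_mult)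
  hence "\<bar>q\<bar> \<le> Lfi i" using ab by simp
  thus "q \<le> LL" using Lfi_le[of i] by linarith
qed

lemma grad_lip: "norm (grad f x - grad f z) \<le> LL * norm (x - z)"
proof (rule norm_le_comp)
  fix i
  have "\<bar>deriv (f i) (x $ i) - deriv (f i) (z $ i)\<bar> \<le> Lfi i * \<bar>x $ i - z $ i\<bar>" by (rule smooth_lip[OF sm])
  also have "\<dots> \<le> LL * \<bar>x $ i - z $ i\<bar>" using Lfi_le[of i] by (intro mult_right_mono) auto
  finally show "\<bar>(grad f x - grad f z) $ i\<bar> \<le> LL * \<bar>(x - z) $ i\<bar>" by (simp add: grad_def)
qed (use LL_pos in simp)

lemma avg_contr: "\<bar>t - u - alpha * ((\<Sum>i\<in>UNIV. deriv (f i) t) - (\<Sum>i\<in>UNIV. deriv (f i) u)) / real CARD('n)\<bar>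
   \<le> sqrt (1 - kappa) * \<bar>t - u\<bar>"
proof (cases "t = u")
  case True then show ?thesis by simp
next
  case False
  define q where "q i = (deriv (f i) t - deriv (f i) u) / (t - u)" for i
  define s where "s = (\<Sum>i\<in>UNIV. q i) / real CARD('n)"
  have Np: "0 < real CARD('n)" by simp
  have "(\<Sum>i\<in>(UNIV::'n set). mm) \<le> (\<Sum>i\<in>UNIV. q i)" unfolding q_def by (rule sum_mono) (rule slope_bounds(1)[OF False])
  hence s1: "mm \<le> s" using Np by (simp add: s_def field_simps)
  have "(\<Sum>i\<in>UNIV. q i) \<le> (\<Sum>i\<in>(UNIV::'n set). LL)" unfolding q_def by (rule sum_mono) (rule slope_bounds(2)[OF False])
  hence s2: "s \<le> LL" using Np by (simp add: s_def field_simps)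
  have E: "(\<Sum>i\<in>UNIV. deriv (f i) t) - (\<Sum>i\<in>UNIV. deriv (f i) u) = (\<Sum>i\<in>UNIV. q i) * (t - u)"
    using False by (simp add: q_def sum_subtractf[symmetric] sum_distrib_right)
  have "t - u - alpha * ((\<Sum>i\<in>UNIV. deriv (f i) t) - (\<Sum>i\<in>UNIV. deriv (f i) u)) / real CARD('n)
       = t - u - alpha * ((\<Sum>i\<in>UNIV. q i) * (t - u)) / real CARD('n)" by (simp only: E)
  also have "\<dots> = (1 - alpha * s) * (t - u)" using Np by (simp add: s_def field_simps)
  finally have "t - u - alpha * ((\<Sum>i\<in>UNIV. deriv (f i) t) - (\<Sum>i\<in>UNIV. deriv (f i) u)) / real CARD('n)
       = (1 - alpha * s) * (t - u)" .
  hence "\<bar>t - u - alpha * ((\<Sum>i\<in>UNIV. deriv (f i) t) - (\<Sum>i\<in>UNIV. deriv (f i) u)) / real CARD('n)\<bar>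
       = \<bar>1 - alpha * s\<bar> * \<bar>t - u\<bar>" by (simp add: abs_mult)
  also have "\<dots> \<le> sqrt (1 - kappa) * \<bar>t - u\<bar>" using contr1[OF s1 s2] by (intro mult_right_mono) auto
  finally show ?thesis .
qed

lemma step1:
  fixes x e :: "real^'n"
  defines "y \<equiv> W *v x - alpha *\<^sub>R grad f x"
  defines "x' \<equiv> prox alpha (sepsum g) y + e"
  shows "norm (avg x' - (\<chi> i. xstar)) \<le> sqrt (1 - kappa) * norm (avg x - (\<chi> i. xstar))
           + alpha * LL * norm (x - avg x) + 2 * alpha * Lg + norm e"
proof -
  let ?p = "prox alpha (sepsum g) y"
  let ?xs = "(\<chi> i. xstar) :: real^'n"
  define t where "t = (\<Sum>j\<in>UNIV. x $ j) / real CARD('n)"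
  have ax: "avg x = (\<chi> i. t)" by (simp add: avg_is_const t_def)
  define T1 where "T1 = avg x - ?xs - alpha *\<^sub>R (avg (grad f (avg x)) - avg (grad f ?xs))"
  have ay: "avg y = avg x - alpha *\<^sub>R avg (grad f x)"
    by (simp add: y_def avg_diff avg_scale avg_W[OF W_ds])
  have dec: "avg x' - ?xs = avg (?p - y) + T1 - alpha *\<^sub>R avg (grad f x - grad f (avg x)) - alpha *\<^sub>R avg (grad f ?xs) + avg e"
    by (simp add: x'_def T1_def avg_add avg_diff ay algebra_simps)
  have n1: "norm (avg (?p - y)) \<le> alpha * Lg"
    using norm_avg_le[of "?p - y"] proxctx.prox_close[OF proxctx, of y] by linarith
  have n2: "norm (alpha *\<^sub>R avg (grad f x - grad f (avg x))) \<le> alpha * LL * norm (x - avg x)"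
  proof -
    have "norm (avg (grad f x - grad f (avg x))) \<le> LL * norm (x - avg x)"
      using norm_avg_le[of "grad f x - grad f (avg x)"] grad_lip[of x "avg x"] by linarith
    thus ?thesis using alpha_pos by (simp add: mult_left_mono mult.assoc)
  qed
  have n3: "norm (alpha *\<^sub>R avg (grad f ?xs)) \<le> alpha * Lg"
  proof -
    have g: "grad f ?xs = (\<chi> i. deriv (f i) xstar)" by (simp add: grad_def)
    have "avg (grad f ?xs) = (\<chi> i. (\<Sum>j\<in>UNIV. deriv (f j) xstar) / real CARD('n))"
      by (simp add: g avg_def)
    hence "norm (avg (grad f ?xs)) = sqrt (real CARD('n)) * (\<bar>\<Sum>j\<in>UNIV. deriv (f j) xstar\<bar> / real CARD('n))"
      by (simp add: norm_const)
    also have "\<dots> \<le> sqrt (real CARD('n)) * (Lg * sqrt (real CARD('n)) / real CARD('n))"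
      using xstar_grad by (intro mult_left_mono divide_right_mono) auto
    also have "\<dots> = Lg" by (simp add: field_simps)
    finally show ?thesis using alpha_pos by (simp add: mult_left_mono)
  qed
  have n4: "norm T1 \<le> sqrt (1 - kappa) * norm (avg x - ?xs)"
  proof -
    have gt: "grad f (avg x) = (\<chi> i. deriv (f i) t)" by (simp add: grad_def ax)
    have gs: "grad f ?xs = (\<chi> i. deriv (f i) xstar)" by (simp add: grad_def)
    have "T1 = (\<chi> i. t - xstar - alpha * ((\<Sum>j\<in>UNIV. deriv (f j) t) - (\<Sum>j\<in>UNIV. deriv (f j) xstar)) / real CARD('n))"
    proof -
      have "T1 = (\<chi> i. t) - ?xs - alpha *\<^sub>R (avg (\<chi> i. deriv (f i) t) - avg (\<chi> i. deriv (f i) xstar))"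
        unfolding T1_def gt gs by (simp only: ax)
      thus ?thesis by (simp add: avg_def vec_eq_iff diff_divide_distrib[symmetric])
    qed
    hence "norm T1 = sqrt (real CARD('n)) * \<bar>t - xstar - alpha * ((\<Sum>j\<in>UNIV. deriv (f j) t) - (\<Sum>j\<in>UNIV. deriv (f j) xstar)) / real CARD('n)\<bar>"
      by (simp add: norm_const)
    also have "\<dots> \<le> sqrt (real CARD('n)) * (sqrt (1 - kappa) * \<bar>t - xstar\<bar>)"
      by (intro mult_left_mono avg_contr) auto
    also have "\<dots> = sqrt (1 - kappa) * norm (avg x - ?xs)"
    proof -
      have "avg x - ?xs = (\<chi> i. t - xstar)" by (simp add: ax vec_eq_iff)
      thus ?thesis by (simp add: norm_const)
    qed
    finally show ?thesis .
  qed
  have "norm (avg x' - ?xs) \<le> norm (avg (?p - y)) + norm T1 + norm (alpha *\<^sub>R avg (grad f x - grad f (avg x)))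
        + norm (alpha *\<^sub>R avg (grad f ?xs)) + norm (avg e)"
    unfolding dec by (rule norm5)
  thus ?thesis using n1 n2 n3 n4 norm_avg_le[of e] by linarith
qed

end


context setting
begin

lemma step2:
  fixes x e :: "real^'n"
  defines "y \<equiv> W *v x - alpha *\<^sub>R grad f x"
  defines "x' \<equiv> prox alpha (sepsum g) y + e"
  shows "norm (x' - avg x') \<le> rho W * norm (x - avg x) + alpha * LL * norm (x - xt)
           + (2 * alpha * Lg + norm (xt - W *v xt)) + norm e"
proof -
  let ?p = "prox alpha (sepsum g) y"
  define w where "w = alpha *\<^sub>R grad f x"
  have ay: "avg y = avg x - avg w"
    by (simp add: y_def w_def avg_diff avg_scale avg_W[OF W_ds])
  have dec: "x' - avg x' = ((?p - y) - avg (?p - y)) + (W - Jmat) *v (x - avg x) - (w - avg w) - 0 + (e - avg e)"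
    by (simp add: x'_def avg_add avg_diff ay WJ_dev[OF W_ds] y_def w_def algebra_simps Jmat_mult W_avg[OF W_ds] avg_W[OF W_ds] avg_avg)
  have n1: "norm ((?p - y) - avg (?p - y)) \<le> alpha * Lg"
    using norm_P_le[of "?p - y"] proxctx.prox_close[OF proxctx, of y] by linarith
  have n2: "norm ((W - Jmat) *v (x - avg x)) \<le> rho W * norm (x - avg x)" by (rule rho_bound)
  have n3: "norm (w - avg w) \<le> alpha * LL * norm (x - xt) + (alpha * Lg + norm (xt - W *v xt))"
  proof -
    define a1 where "a1 = alpha *\<^sub>R (grad f x - grad f xt)"
    define a2 where "a2 = xt - W *v xt + alpha *\<^sub>R grad f xt"
    define a3 where "a3 = xt - W *v xt"
    have "w = a1 + a2 - a3"
      by (simp add: w_def a1_def a2_def a3_def algebra_simps)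
    hence "norm w \<le> norm a1 + norm a2 + norm a3"
      using norm_triangle_ineq4[of "a1 + a2" a3] norm_triangle_ineq[of a1 a2] by simp
    hence "norm w \<le> norm (alpha *\<^sub>R (grad f x - grad f xt)) + norm (xt - W *v xt + alpha *\<^sub>R grad f xt) + norm (xt - W *v xt)"
      by (simp add: a1_def a2_def a3_def)
    moreover have "norm (alpha *\<^sub>R (grad f x - grad f xt)) \<le> alpha * LL * norm (x - xt)"
      using grad_lip[of x xt] alpha_pos by (simp add: mult_left_mono mult.assoc)
    ultimately have "norm w \<le> alpha * LL * norm (x - xt) + (alpha * Lg + norm (xt - W *v xt))"
      using yt_close by linarith
    thus ?thesis using norm_P_le[of w] by linarith
  qed
  have "norm (x' - avg x') \<le> norm ((?p - y) - avg (?p - y)) + norm ((W - Jmat) *v (x - avg x)) + norm (w - avg w) + norm (0::real^'n) + norm (e - avg e)"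
    unfolding dec by (rule norm5)
  thus ?thesis using n1 n2 n3 norm_P_le[of e] by simp
qed

lemma step3:
  fixes x e :: "real^'n"
  defines "y \<equiv> W *v x - alpha *\<^sub>R grad f x"
  defines "x' \<equiv> prox alpha (sepsum g) y + e"
  shows "norm (x' - xt) \<le> zeta * norm (x - xt) + norm e"
proof -
  define dv where "dv i = (if x $ i = xt $ i then mm else (deriv (f i) (x $ i) - deriv (f i) (xt $ i)) / (x $ i - xt $ i))" for i
  have dvb: "mm \<le> dv i \<and> dv i \<le> LL" for i
    using slope_bounds[of "x $ i" "xt $ i" i] mm_le_LL by (auto simp: dv_def)
  define S :: "real^'n^'n" where "S = (\<chi> i j. W $ i $ j - (if i = j then alpha * dv i else 0))"
  have Sv: "S *v v = W *v v - alpha *\<^sub>R (\<chi> i. dv i * v $ i)" for v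
  proof -
    have "(S *v v) $ i = (\<Sum>j\<in>UNIV. W $ i $ j * v $ j) - (\<Sum>j\<in>UNIV. if i = j then alpha * dv i * v $ j else 0)" for i
    proof -
      have "(S *v v) $ i = (\<Sum>j\<in>UNIV. W $ i $ j * v $ j - (if i = j then alpha * dv i * v $ j else 0))"
        by (simp add: S_def matrix_vector_mult_def left_diff_distrib) (intro sum.cong refl, simp)
      thus ?thesis by (simp add: sum_subtractf)
    qed
    thus ?thesis by (simp add: vec_eq_iff matrix_vector_mult_def)
  qed
  have wsym: "W $ j $ i = W $ i $ j" for i j
  proof -
    have "transpose W $ i $ j = W $ i $ j" using W_sym[OF W_ds] by simp
    thus ?thesis by (simp add: transpose_def)
  qed
  have Ssym: "transpose S = S" by (simp add: S_def transpose_def vec_eq_iff wsym)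
  have quad: "\<bar>v \<bullet> (S *v v)\<bar> \<le> zeta * (v \<bullet> v)" for v
  proof -
    have q: "v \<bullet> (S *v v) = v \<bullet> (W *v v) - alpha * (\<Sum>i\<in>UNIV. dv i * (v $ i)^2)"
    proof -
      have "v \<bullet> (\<chi> i. dv i * v $ i) = (\<Sum>i\<in>UNIV. dv i * (v $ i)^2)"
        unfolding inner_vec_sum by (intro sum.cong refl) (simp add: power2_eq_square)
      thus ?thesis by (simp add: Sv inner_diff_right)
    qed
    have vv: "v \<bullet> v = (\<Sum>i\<in>UNIV. (v $ i)^2)" by (simp add: inner_vec_sum power2_eq_square)
    have s1: "mm * (v \<bullet> v) \<le> (\<Sum>i\<in>UNIV. dv i * (v $ i)^2)"
      unfolding vv sum_distrib_left by (rule sum_mono) (use dvb in \<open>simp add: mult_right_mono\<close>)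
    have s2: "(\<Sum>i\<in>UNIV. dv i * (v $ i)^2) \<le> LL * (v \<bullet> v)"
      unfolding vv sum_distrib_left by (rule sum_mono) (use dvb in \<open>simp add: mult_right_mono\<close>)
    have v0: "0 \<le> v \<bullet> v" by simp
    have up: "v \<bullet> (S *v v) \<le> zeta * (v \<bullet> v)"
    proof -
      have "v \<bullet> (S *v v) \<le> v \<bullet> v - alpha * (mm * (v \<bullet> v))"
        using q W_quad_le[OF W_ds, of v] mult_left_mono[OF s1, of alpha] alpha_pos by linarith
      also have "\<dots> = (1 - alpha * mm) * (v \<bullet> v)" by (simp add: algebra_simps)
      also have "\<dots> \<le> zeta * (v \<bullet> v)" using v0 by (intro mult_right_mono) (auto simp: zeta_def)
      finally show ?thesis .
    qed
    have lo: "- (zeta * (v \<bullet> v)) \<le> v \<bullet> (S *v v)"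
    proof -
      have "- (zeta * (v \<bullet> v)) \<le> (lambda_min W - alpha * LL) * (v \<bullet> v)"
      proof -
        have "- zeta \<le> lambda_min W - alpha * LL" by (simp add: zeta_def)
        thus ?thesis using v0 mult_right_mono by fastforce
      qed
      also have "\<dots> = lambda_min W * (v \<bullet> v) - alpha * (LL * (v \<bullet> v))" by (simp add: algebra_simps)
      also have "\<dots> \<le> v \<bullet> (S *v v)"
        using q lmin_quad[of v] mult_left_mono[OF s2, of alpha] alpha_pos by linarith
      finally show ?thesis .
    qed
    show ?thesis using up lo by linarith
  qed
  have SD: "S *v (x - xt) = y - yt"
  proof -
    have E: "(\<chi> i. dv i * (x - xt) $ i) = grad f x - grad f xt"
      by (simp add: vec_eq_iff dv_def grad_def)
    have "S *v (x - xt) = W *v (x - xt) - alpha *\<^sub>R (grad f x - grad f xt)" by (simp only: Sv E)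
    thus ?thesis by (simp add: y_def yt_def matrix_vector_mult_diff_distrib algebra_simps)
  qed
  have "norm (prox alpha (sepsum g) y - prox alpha (sepsum g) yt) \<le> norm (y - yt)"
    by (rule proxctx.prox_nonexp[OF proxctx])
  also have "\<dots> = norm (S *v (x - xt))" by (simp add: SD)
  also have "\<dots> \<le> zeta * norm (x - xt)" by (rule sym_norm_bound[OF Ssym quad])
  finally have "norm (prox alpha (sepsum g) y - xt) \<le> zeta * norm (x - xt)" by (simp add: prox_fix)
  moreover have "norm (x' - xt) \<le> norm (prox alpha (sepsum g) y - xt) + norm e"
  proof -
    have "x' - xt = (prox alpha (sepsum g) y - xt) + e" by (simp add: x'_def algebra_simps)
    thus ?thesis by (metis norm_triangle_ineq)
  qed
  ultimately show ?thesis by linarith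
qed

end


lemma (in prob_space) int_step:
  fixes D D' :: "'a \<Rightarrow> real^'m::finite" and E :: "'a \<Rightarrow> real" and a :: "'m \<Rightarrow> real"
  assumes iD: "\<forall>j. integrable M (\<lambda>\<omega>. D \<omega> $ j)" and iD': "integrable M (\<lambda>\<omega>. D' \<omega> $ k)"
    and iE: "integrable M E"
    and pw: "\<forall>\<omega>. D' \<omega> $ k \<le> (\<Sum>j\<in>UNIV. a j * D \<omega> $ j) + c + E \<omega>"
  shows "(\<integral>\<omega>. D' \<omega> $ k \<partial>M) \<le> (\<Sum>j\<in>UNIV. a j * (\<integral>\<omega>. D \<omega> $ j \<partial>M)) + c + (\<integral>\<omega>. E \<omega> \<partial>M)"
proof -
  have isum: "integrable M (\<lambda>\<omega>. \<Sum>j\<in>UNIV. a j * D \<omega> $ j)"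
    by (intro Bochner_Integration.integrable_sum Bochner_Integration.integrable_mult_right) (use iD in auto)
  have ic: "integrable M (\<lambda>\<omega>. c)" by simp
  have isc: "integrable M (\<lambda>\<omega>. (\<Sum>j\<in>UNIV. a j * D \<omega> $ j) + c)" using isum ic by (rule Bochner_Integration.integrable_add)
  have ir: "integrable M (\<lambda>\<omega>. (\<Sum>j\<in>UNIV. a j * D \<omega> $ j) + c + E \<omega>)" using isc iE by (rule Bochner_Integration.integrable_add)
  have "(\<integral>\<omega>. D' \<omega> $ k \<partial>M) \<le> (\<integral>\<omega>. (\<Sum>j\<in>UNIV. a j * D \<omega> $ j) + c + E \<omega> \<partial>M)"
    by (intro Bochner_Integration.integral_mono) (use iD' ir pw in auto)
  also have "\<dots> = (\<integral>\<omega>. (\<Sum>j\<in>UNIV. a j * D \<omega> $ j) + c \<partial>M) + (\<integral>\<omega>. E \<omega> \<partial>M)"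
    using isc iE by (rule Bochner_Integration.integral_add)
  also have "(\<integral>\<omega>. (\<Sum>j\<in>UNIV. a j * D \<omega> $ j) + c \<partial>M) = (\<integral>\<omega>. (\<Sum>j\<in>UNIV. a j * D \<omega> $ j) \<partial>M) + (\<integral>\<omega>. c \<partial>M)"
    using isum ic by (rule Bochner_Integration.integral_add)
  also have "(\<integral>\<omega>. c \<partial>M) = c" by (simp add: prob_space)
  also have "(\<integral>\<omega>. (\<Sum>j\<in>UNIV. a j * D \<omega> $ j) \<partial>M) = (\<Sum>j\<in>UNIV. \<integral>\<omega>. a j * D \<omega> $ j \<partial>M)"
    by (intro Bochner_Integration.integral_sum Bochner_Integration.integrable_mult_right) (use iD in auto)
  also have "\<dots> = (\<Sum>j\<in>UNIV. a j * (\<integral>\<omega>. D \<omega> $ j \<partial>M))" by simp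
  finally show ?thesis .
qed

theorem proposition1:
  fixes E :: "'n::finite \<Rightarrow> 'n \<Rightarrow> bool"
    and W :: "real^'n^'n"
    and f g :: "'n \<Rightarrow> real \<Rightarrow> real"
    and Lfi mfi :: "'n \<Rightarrow> real"
    and Lg alpha eta xstar :: real
    and xt :: "real^'n"
    and M :: "'a measure"
    and x e :: "nat \<Rightarrow> 'a \<Rightarrow> real^'n"
  defines "xs \<equiv> (\<chi> i. xstar) :: real^'n"
    and "c \<equiv> sqrt (1 - 2 * alpha * Min (range mfi) * Max (range Lfi) / (Min (range mfi) + Max (range Lfi)))"
    and "zeta \<equiv> max \<bar>1 - (1 - lambda_min W + alpha * Max (range Lfi))\<bar> \<bar>1 - alpha * Min (range mfi)\<bar>"
    and "A \<equiv> vector [vector [sqrt (1 - 2 * alpha * Min (range mfi) * Max (range Lfi) / (Min (range mfi) + Max (range Lfi))), alpha * Max (range Lfi), 0],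
                     vector [0, rho W, alpha * Max (range Lfi)],
                     vector [0, 0, max \<bar>1 - (1 - lambda_min W + alpha * Max (range Lfi))\<bar> \<bar>1 - alpha * Min (range mfi)\<bar>]] :: real^3^3"
    and "b \<equiv> vector [2 * alpha * Lg, 2 * alpha * Lg + norm (xt - W *v xt), 0] :: real^3"
    and "d \<equiv> (\<lambda>l \<omega>. vector [norm (avg (x l \<omega>) - (\<chi> i. xstar)), norm (x l \<omega> - avg (x l \<omega>)),
                              norm (x l \<omega> - xt)] :: real^3)"
  assumes N2: "CARD('n) \<ge> 2"
    and E_sym: "\<forall>i j. E i j \<longrightarrow> E j i"
    and E_conn: "\<forall>i j. E\<^sup>*\<^sup>* i j"
    and W_ds: "doubly_stochastic_sym W"
    and W_graph: "\<forall>i j. i \<noteq> j \<and> \<not> E i j \<longrightarrow> W $ i $ j = 0"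
    and rho_pos: "0 < rho W" and rho_lt1: "rho W < 1"
    and f_smooth: "\<forall>i. smooth_fun (Lfi i) (f i)"
    and f_sc: "\<forall>i. strongly_convex_fun (mfi i) (f i)"
    and g_convex: "\<forall>i. convex_on UNIV (g i)"
    and g_lip: "\<forall>i. \<exists>K. \<forall>u v. \<bar>g i u - g i v\<bar> \<le> K * \<bar>u - v\<bar>"
    and Lg_nonneg: "Lg \<ge> 0"
    and Lg_lip: "\<forall>u v. \<bar>sepsum g u - sepsum g v\<bar> \<le> Lg * norm (u - v)"
    and xstar_min: "\<forall>y. (\<Sum>i\<in>UNIV. f i xstar + g i xstar) \<le> (\<Sum>i\<in>UNIV. f i y + g i y)"
    and xt_min: "\<forall>z. (1/2) * (xt \<bullet> (xt - W *v xt)) + alpha * sepsum f xt + alpha * sepsum g xt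
                   \<le> (1/2) * (z \<bullet> (z - W *v z)) + alpha * sepsum f z + alpha * sepsum g z"
    and alpha_pos: "0 < alpha"
    and alpha_lt: "alpha < min ((1 + lambda_min W) / Max (range Lfi)) (2 / (Max (range Lfi) + Min (range mfi)))"
    and M_prob: "prob_space M"
    and x0_meas: "x 0 \<in> borel_measurable M"
    and e_meas: "\<forall>l. e l \<in> borel_measurable M"
    and e_int: "\<forall>l. integrable M (\<lambda>\<omega>. norm (e l \<omega>))"
    and e_bound: "\<forall>l. (\<integral>\<omega>. norm (e l \<omega>) \<partial>M) \<le> eta"
    and iter: "\<forall>l \<omega>. x (Suc l) \<omega> =
                 prox alpha (sepsum g) (W *v x l \<omega> - alpha *\<^sub>R grad f (x l \<omega>)) + e l \<omega>"
  shows "0 < c \<and> c < 1 \<and> 0 < rho W \<and> rho W < 1 \<and> 0 < zeta \<and> zeta < 1 \<and>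
    (\<forall>l. (\<forall>k. integrable M (\<lambda>\<omega>. d l \<omega> $ k) \<and> integrable M (\<lambda>\<omega>. d (Suc l) \<omega> $ k))
          \<and> integrable M (\<lambda>\<omega>. norm (x (Suc l) \<omega> - xs)) \<longrightarrow>
       (\<chi> k. \<integral>\<omega>. d (Suc l) \<omega> $ k \<partial>M)
         \<le> A *v (\<chi> k. \<integral>\<omega>. d l \<omega> $ k \<partial>M) + b + (\<integral>\<omega>. norm (e l \<omega>) \<partial>M) *\<^sub>R (1 :: real^3)
       \<and> (\<integral>\<omega>. norm (x (Suc l) \<omega> - xs) \<partial>M)
         \<le> (\<integral>\<omega>. d (Suc l) \<omega> $ 1 \<partial>M) + (\<integral>\<omega>. d (Suc l) \<omega> $ 2 \<partial>M))"
proof -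
  interpret S: setting W f g Lfi mfi Lg alpha xstar xt
    by unfold_locales (use W_ds f_smooth f_sc g_convex Lg_nonneg Lg_lip xstar_min xt_min alpha_pos alpha_lt in auto)
  interpret P: prob_space M by (rule M_prob)
  have cdef: "c = sqrt (1 - S.kappa)" unfolding c_def S.kappa_def S.mm_def S.LL_def ..
  have zdef: "zeta = S.zeta" unfolding zeta_def S.zeta_def S.mm_def S.LL_def ..
  have part1: "0 < c \<and> c < 1 \<and> 0 < rho W \<and> rho W < 1 \<and> 0 < zeta \<and> zeta < 1"
    using S.c_bounds S.zeta_bounds rho_pos rho_lt1 unfolding cdef zdef by auto
  have Aeq: "A = vector [vector [c, alpha * S.LL, 0], vector [0, rho W, alpha * S.LL], vector [0, 0, zeta]]"
    unfolding A_def c_def zeta_def S.LL_def ..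
  have Av: "(A *v v) $ k = (\<Sum>j\<in>UNIV. A $ k $ j * v $ j)" for v :: "real^3" and k
    by (simp add: matrix_vector_mult_def)
  have pw: "d (Suc l) \<omega> $ k \<le> (\<Sum>j\<in>UNIV. A $ k $ j * d l \<omega> $ j) + b $ k + norm (e l \<omega>)" for l \<omega> k
  proof -
    let ?x = "x l \<omega>"
    have xs: "x (Suc l) \<omega> = prox alpha (sepsum g) (W *v ?x - alpha *\<^sub>R grad f ?x) + e l \<omega>"
      using iter by blast
    note s1 = S.step1[of ?x "e l \<omega>"]
    note s2 = S.step2[of ?x "e l \<omega>"]
    note s3 = S.step3[of ?x "e l \<omega>"]
    consider "k = 1" | "k = 2" | "k = 3" using exhaust_3 by blast
    then show ?thesis
    proof cases
      case 1 then show ?thesis using s1 unfolding xs[symmetric] by (simp add: Aeq b_def d_def sum_3 cdef)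
    next
      case 2 then show ?thesis using s2 unfolding xs[symmetric] by (simp add: Aeq b_def d_def sum_3)
    next
      case 3 then show ?thesis using s3 unfolding xs[symmetric] by (simp add: Aeq b_def d_def sum_3 zdef)
    qed
  qed
  have part2: "(\<chi> k. \<integral>\<omega>. d (Suc l) \<omega> $ k \<partial>M)
         \<le> A *v (\<chi> k. \<integral>\<omega>. d l \<omega> $ k \<partial>M) + b + (\<integral>\<omega>. norm (e l \<omega>) \<partial>M) *\<^sub>R (1 :: real^3)
       \<and> (\<integral>\<omega>. norm (x (Suc l) \<omega> - xs) \<partial>M)
         \<le> (\<integral>\<omega>. d (Suc l) \<omega> $ 1 \<partial>M) + (\<integral>\<omega>. d (Suc l) \<omega> $ 2 \<partial>M)"
    if int: "(\<forall>k. integrable M (\<lambda>\<omega>. d l \<omega> $ k) \<and> integrable M (\<lambda>\<omega>. d (Suc l) \<omega> $ k))"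
       "integrable M (\<lambda>\<omega>. norm (x (Suc l) \<omega> - xs))" for l
  proof
    show "(\<chi> k. \<integral>\<omega>. d (Suc l) \<omega> $ k \<partial>M)
         \<le> A *v (\<chi> k. \<integral>\<omega>. d l \<omega> $ k \<partial>M) + b + (\<integral>\<omega>. norm (e l \<omega>) \<partial>M) *\<^sub>R (1 :: real^3)"
      unfolding less_eq_vec_def
    proof
      fix k
      have "(\<integral>\<omega>. d (Suc l) \<omega> $ k \<partial>M) \<le> (\<Sum>j\<in>UNIV. A $ k $ j * (\<integral>\<omega>. d l \<omega> $ j \<partial>M)) + b $ k + (\<integral>\<omega>. norm (e l \<omega>) \<partial>M)"
        by (intro P.int_step) (use int e_int pw in auto)
      thus "(\<chi> k. \<integral>\<omega>. d (Suc l) \<omega> $ k \<partial>M) $ k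
          \<le> (A *v (\<chi> k. \<integral>\<omega>. d l \<omega> $ k \<partial>M) + b + (\<integral>\<omega>. norm (e l \<omega>) \<partial>M) *\<^sub>R (1 :: real^3)) $ k"
        by (simp add: Av)
    qed
    have "(\<integral>\<omega>. norm (x (Suc l) \<omega> - xs) \<partial>M) \<le> (\<integral>\<omega>. d (Suc l) \<omega> $ 1 + d (Suc l) \<omega> $ 2 \<partial>M)"
    proof (rule Bochner_Integration.integral_mono)
      show "integrable M (\<lambda>\<omega>. d (Suc l) \<omega> $ 1 + d (Suc l) \<omega> $ 2)" using int by auto
      fix \<omega>
      have "x (Suc l) \<omega> - xs = (avg (x (Suc l) \<omega>) - xs) + (x (Suc l) \<omega> - avg (x (Suc l) \<omega>))" by simp
      hence "norm (x (Suc l) \<omega> - xs) \<le> norm (avg (x (Suc l) \<omega>) - xs) + norm (x (Suc l) \<omega> - avg (x (Suc l) \<omega>))"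
        by (metis norm_triangle_ineq)
      thus "norm (x (Suc l) \<omega> - xs) \<le> d (Suc l) \<omega> $ 1 + d (Suc l) \<omega> $ 2" by (simp add: d_def xs_def)
    qed (use int in auto)
    also have "\<dots> = (\<integral>\<omega>. d (Suc l) \<omega> $ 1 \<partial>M) + (\<integral>\<omega>. d (Suc l) \<omega> $ 2 \<partial>M)"
      by (intro Bochner_Integration.integral_add) (use int in auto)
    finally show "(\<integral>\<omega>. norm (x (Suc l) \<omega> - xs) \<partial>M)
         \<le> (\<integral>\<omega>. d (Suc l) \<omega> $ 1 \<partial>M) + (\<integral>\<omega>. d (Suc l) \<omega> $ 2 \<partial>M)" .
  qed
  show ?thesis using part1 part2 by blast
qed


end
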